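(* Let $m$ be a prime, let $F$ be a field containing a primitive $m$th root of unity, and let $K/F$ be a cyclic Galois extension of degree $m$. Then $K$ has a nonassociative cyclic extension of degree $m$.
   Context: Definition: if $A$ is a nonassociative division algebra (an algebra $A\neq 0$ in which left and right multiplication by every nonzero element are bijective) and $D\subseteq A$ an associative division subalgebra, $A$ is a nonassociative cyclic extension of $D$ of degree $m$ if $A$ is a free left $D$-module of rank $m$ and $\mathrm{Aut}(A)$ has a cyclic subgroup $G$ of order $m$ such that $H|_D=\mathrm{id}_D$ for all $H\in G$. *)

theory Defs
  imports "HOL-Algebra.Algebra"
begin

definition primitive_root_of_unity :: "('a, 'm) ring_scheme \<Rightarrow> nat \<Rightarrow> 'a \<Rightarrow> bool" where
  "primitive_root_of_unity K m w \<longleftrightarrow>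
     w \<in> carrier K \<and> w [^]\<^bsub>K\<^esub> m = \<one>\<^bsub>K\<^esub> \<and>
     (\<forall>k. 0 < k \<and> k < m \<longrightarrow> w [^]\<^bsub>K\<^esub> k \<noteq> \<one>\<^bsub>K\<^esub>)"

text \<open>The Galois group Gal(K/F): ring automorphisms of K fixing F pointwise
  (taken extensional, so that distinct elements are distinct maps on K).\<close>
definition Gal :: "('a, 'm) ring_scheme \<Rightarrow> 'a set \<Rightarrow> ('a \<Rightarrow> 'a) set" where
  "Gal K F = {\<sigma>. \<sigma> \<in> ring_iso K K \<and> \<sigma> \<in> extensional (carrier K) \<and> (\<forall>x\<in>F. \<sigma> x = x)}"

text \<open>K/F is a cyclic Galois extension of degree m: [K:F] = m, the extension is
  Galois (|Gal(K/F)| = [K:F]) and Gal(K/F) is cyclic.\<close>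
definition cyclic_galois_ext :: "('a, 'm) ring_scheme \<Rightarrow> 'a set \<Rightarrow> nat \<Rightarrow> bool" where
  "cyclic_galois_ext K F m \<longleftrightarrow>
     field K \<and> subfield F K \<and>
     ring.dimension K m F (carrier K) \<and>
     card (Gal K F) = m \<and>
     (\<exists>\<sigma>\<in>Gal K F. Gal K F = {restrict (\<sigma> ^^ i) (carrier K) | i. True})"

definition nonassoc_algebra :: "('a, 'm) ring_scheme \<Rightarrow> 'a set \<Rightarrow> ('a, 'b) module \<Rightarrow> bool" where
  "nonassoc_algebra K F A \<longleftrightarrow>
     module (K\<lparr>carrier := F\<rparr>) A \<and>
     (\<forall>x\<in>carrier A. \<forall>y\<in>carrier A. x \<otimes>\<^bsub>A\<^esub> y \<in> carrier A) \<and>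
     (\<forall>x\<in>carrier A. \<forall>y\<in>carrier A. \<forall>z\<in>carrier A.
        x \<otimes>\<^bsub>A\<^esub> (y \<oplus>\<^bsub>A\<^esub> z) = x \<otimes>\<^bsub>A\<^esub> y \<oplus>\<^bsub>A\<^esub> x \<otimes>\<^bsub>A\<^esub> z \<and>
        (y \<oplus>\<^bsub>A\<^esub> z) \<otimes>\<^bsub>A\<^esub> x = y \<otimes>\<^bsub>A\<^esub> x \<oplus>\<^bsub>A\<^esub> z \<otimes>\<^bsub>A\<^esub> x) \<and>
     (\<forall>c\<in>F. \<forall>x\<in>carrier A. \<forall>y\<in>carrier A.
        c \<odot>\<^bsub>A\<^esub> (x \<otimes>\<^bsub>A\<^esub> y) = (c \<odot>\<^bsub>A\<^esub> x) \<otimes>\<^bsub>A\<^esub> y \<and>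
        c \<odot>\<^bsub>A\<^esub> (x \<otimes>\<^bsub>A\<^esub> y) = x \<otimes>\<^bsub>A\<^esub> (c \<odot>\<^bsub>A\<^esub> y)) \<and>
     \<one>\<^bsub>A\<^esub> \<in> carrier A \<and>
     (\<forall>x\<in>carrier A. \<one>\<^bsub>A\<^esub> \<otimes>\<^bsub>A\<^esub> x = x \<and> x \<otimes>\<^bsub>A\<^esub> \<one>\<^bsub>A\<^esub> = x)"

definition nonassoc_division_algebra :: "('a, 'm) ring_scheme \<Rightarrow> 'a set \<Rightarrow> ('a, 'b) module \<Rightarrow> bool" where
  "nonassoc_division_algebra K F A \<longleftrightarrow>
     nonassoc_algebra K F A \<and> carrier A \<noteq> {\<zero>\<^bsub>A\<^esub>} \<and>
     (\<forall>a\<in>carrier A. a \<noteq> \<zero>\<^bsub>A\<^esub> \<longrightarrow>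
        bij_betw (\<lambda>x. a \<otimes>\<^bsub>A\<^esub> x) (carrier A) (carrier A) \<and>
        bij_betw (\<lambda>x. x \<otimes>\<^bsub>A\<^esub> a) (carrier A) (carrier A))"

definition Aut :: "'a set \<Rightarrow> ('a, 'b) module \<Rightarrow> ('b \<Rightarrow> 'b) set" where
  "Aut F A = {h. bij_betw h (carrier A) (carrier A) \<and> h \<in> extensional (carrier A) \<and>
     (\<forall>x\<in>carrier A. \<forall>y\<in>carrier A.
        h (x \<oplus>\<^bsub>A\<^esub> y) = h x \<oplus>\<^bsub>A\<^esub> h y \<and> h (x \<otimes>\<^bsub>A\<^esub> y) = h x \<otimes>\<^bsub>A\<^esub> h y) \<and>
     (\<forall>c\<in>F. \<forall>x\<in>carrier A. h (c \<odot>\<^bsub>A\<^esub> x) = c \<odot>\<^bsub>A\<^esub> h x)}"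

definition free_left_module_rank ::
  "('a, 'm) ring_scheme \<Rightarrow> ('a \<Rightarrow> 'b) \<Rightarrow> ('a, 'b) module \<Rightarrow> nat \<Rightarrow> bool" where
  "free_left_module_rank K \<iota> A m \<longleftrightarrow>
     module K (A\<lparr>smult := (\<lambda>d x. \<iota> d \<otimes>\<^bsub>A\<^esub> x)\<rparr>) \<and>
     (\<exists>b. (\<forall>i<m. b i \<in> carrier A) \<and>
        (\<forall>x\<in>carrier A. \<exists>!c. c \<in> {..<m} \<rightarrow>\<^sub>E carrier K \<and>
            x = finsum A (\<lambda>i. \<iota> (c i) \<otimes>\<^bsub>A\<^esub> b i) {..<m}))"

text \<open>A (an F-algebra, F \<subseteq> K) is a nonassociative cyclic extension of degree m of the field K,
  where K is identified with the subalgebra D = \<iota>(K) of A via the embedding \<iota>.\<close>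
definition nonassoc_cyclic_extension ::
  "('a, 'm) ring_scheme \<Rightarrow> 'a set \<Rightarrow> ('a, 'b) module \<Rightarrow> ('a \<Rightarrow> 'b) \<Rightarrow> nat \<Rightarrow> bool" where
  "nonassoc_cyclic_extension K F A \<iota> m \<longleftrightarrow>
     nonassoc_division_algebra K F A \<and>
     \<iota> \<in> ring_hom K A \<and> inj_on \<iota> (carrier K) \<and>
     (\<forall>c\<in>F. \<forall>k\<in>carrier K. \<iota> (c \<otimes>\<^bsub>K\<^esub> k) = c \<odot>\<^bsub>A\<^esub> \<iota> k) \<and>
     free_left_module_rank K \<iota> A m \<and>
     (\<exists>g\<in>Aut F A.
        card {restrict (g ^^ i) (carrier A) | i. True} = m \<and>
        (\<forall>H\<in>{restrict (g ^^ i) (carrier A) | i. True}. \<forall>k\<in>carrier K. H (\<iota> k) = \<iota> k))"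

end

theory Submission
  imports Defs
begin
definition PR :: "('a,'m) ring_scheme \<Rightarrow> nat \<Rightarrow> (nat \<Rightarrow> 'a) ring" where
 "PR K m = \<lparr>carrier = {..<m} \<rightarrow>\<^sub>E carrier K,
    monoid.mult = (\<lambda>f g. \<lambda>i\<in>{..<m}. f i \<otimes>\<^bsub>K\<^esub> g i),
    one = (\<lambda>i\<in>{..<m}. \<one>\<^bsub>K\<^esub>),
    ring.zero = (\<lambda>i\<in>{..<m}. \<zero>\<^bsub>K\<^esub>),
    ring.add = (\<lambda>f g. \<lambda>i\<in>{..<m}. f i \<oplus>\<^bsub>K\<^esub> g i)\<rparr>"

lemma PR_simps:
  "carrier (PR K m) = {..<m} \<rightarrow>\<^sub>E carrier K"
  "f \<otimes>\<^bsub>PR K m\<^esub> g = (\<lambda>i\<in>{..<m}. f i \<otimes>\<^bsub>K\<^esub> g i)"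
  "\<one>\<^bsub>PR K m\<^esub> = (\<lambda>i\<in>{..<m}. \<one>\<^bsub>K\<^esub>)"
  "\<zero>\<^bsub>PR K m\<^esub> = (\<lambda>i\<in>{..<m}. \<zero>\<^bsub>K\<^esub>)"
  "f \<oplus>\<^bsub>PR K m\<^esub> g = (\<lambda>i\<in>{..<m}. f i \<oplus>\<^bsub>K\<^esub> g i)"
  by (simp_all add: PR_def)

lemma PR_cring:
  assumes "cring K" shows "cring (PR K m)"
proof -
  interpret K: cring K by fact
  show ?thesis
  proof (rule cringI)
    show "abelian_group (PR K m)"
    proof (rule abelian_groupI)
      fix x assume x: "x \<in> carrier (PR K m)"
      show "\<exists>y\<in>carrier (PR K m). y \<oplus>\<^bsub>PR K m\<^esub> x = \<zero>\<^bsub>PR K m\<^esub>"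
        apply (rule bexI[of _ "\<lambda>i\<in>{..<m}. \<ominus>\<^bsub>K\<^esub> x i"])
        using x by (auto simp: PR_simps PiE_iff extensional_def K.l_neg intro!: ext)
    qed (auto simp: PR_simps PiE_iff extensional_def K.a_ac intro!: ext)
    show "comm_monoid (PR K m)"
      by (rule comm_monoidI) (auto simp: PR_simps PiE_iff extensional_def K.m_ac intro!: ext)
    show "\<And>x y z. x \<in> carrier (PR K m) \<Longrightarrow> y \<in> carrier (PR K m) \<Longrightarrow> z \<in> carrier (PR K m) \<Longrightarrow>
         (x \<oplus>\<^bsub>PR K m\<^esub> y) \<otimes>\<^bsub>PR K m\<^esub> z = x \<otimes>\<^bsub>PR K m\<^esub> z \<oplus>\<^bsub>PR K m\<^esub> y \<otimes>\<^bsub>PR K m\<^esub> z"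
      by (auto simp: PR_simps PiE_iff extensional_def K.l_distr intro!: ext)
  qed
qed

locale cyc = K: field K
  for K :: "'a ring" (structure) +
  fixes F :: "'a set" and m :: nat and \<sigma> :: "'a \<Rightarrow> 'a" and a :: 'a and \<omega> :: 'a
  assumes subF: "subfield F K"
    and m2: "2 \<le> m" and primem: "Factorial_Ring.prime m"
    and \<sigma>hom: "\<sigma> \<in> ring_hom K K"
    and \<sigma>inj: "inj_on \<sigma> (carrier K)"
    and \<sigma>F: "\<And>x. x \<in> F \<Longrightarrow> \<sigma> x = x"
    and \<sigma>m: "\<And>x. x \<in> carrier K \<Longrightarrow> (\<sigma>^^m) x = x"
    and aK: "a \<in> carrier K" and a\<sigma>: "\<sigma> a \<noteq> a"
    and \<omega>F: "\<omega> \<in> F" and \<omega>m: "\<omega> [^] m = \<one>"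
    and \<omega>prim: "\<And>k. 0 < k \<Longrightarrow> k < m \<Longrightarrow> \<omega> [^] k \<noteq> \<one>"
    and dimF: "K.dimension m F (carrier K)"

sublocale cyc \<subseteq> R: cring "PR K m"
  by (rule PR_cring) (rule K.cring_axioms)

context cyc
begin

abbreviation "R \<equiv> PR K m"

lemma m0: "0 < m" using m2 by simp

lemma FK: "F \<subseteq> carrier K" using subF by (rule subfieldE(3))

lemma \<sigma>_closed[simp]: "x \<in> carrier K \<Longrightarrow> \<sigma> x \<in> carrier K"
  using \<sigma>hom by (rule ring_hom_closed)
lemma \<sigma>_mult[simp]: "x \<in> carrier K \<Longrightarrow> y \<in> carrier K \<Longrightarrow> \<sigma> (x \<otimes> y) = \<sigma> x \<otimes> \<sigma> y"
  using \<sigma>hom by (rule ring_hom_mult)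
lemma \<sigma>_add[simp]: "x \<in> carrier K \<Longrightarrow> y \<in> carrier K \<Longrightarrow> \<sigma> (x \<oplus> y) = \<sigma> x \<oplus> \<sigma> y"
  using \<sigma>hom by (rule ring_hom_add)
lemma \<sigma>_one[simp]: "\<sigma> \<one> = \<one>"
  using \<sigma>hom by (rule ring_hom_one)
lemma \<sigma>_zero[simp]: "\<sigma> \<zero> = \<zero>"
  using \<sigma>hom K.ring_axioms by (simp add: ring_hom_zero)

lemma \<sigma>n_closed[simp]: "x \<in> carrier K \<Longrightarrow> (\<sigma>^^n) x \<in> carrier K"
  by (induct n) auto
lemma \<sigma>n_mult[simp]: "x \<in> carrier K \<Longrightarrow> y \<in> carrier K \<Longrightarrow> (\<sigma>^^n) (x \<otimes> y) = (\<sigma>^^n) x \<otimes> (\<sigma>^^n) y"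
  by (induct n) auto
lemma \<sigma>n_add[simp]: "x \<in> carrier K \<Longrightarrow> y \<in> carrier K \<Longrightarrow> (\<sigma>^^n) (x \<oplus> y) = (\<sigma>^^n) x \<oplus> (\<sigma>^^n) y"
  by (induct n) auto
lemma \<sigma>n_one[simp]: "(\<sigma>^^n) \<one> = \<one>"
  by (induct n) auto
lemma \<sigma>n_zero[simp]: "(\<sigma>^^n) \<zero> = \<zero>"
  by (induct n) auto
lemma \<sigma>n_F[simp]: "x \<in> F \<Longrightarrow> (\<sigma>^^n) x = x"
  by (induct n) (auto simp: \<sigma>F)
lemma \<sigma>_F'[simp]: "x \<in> F \<Longrightarrow> \<sigma> x = x" by (rule \<sigma>F)
lemma \<omega>K[simp]: "\<omega> \<in> carrier K" using \<omega>F FK by auto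
lemma \<omega>pow_F: "\<omega> [^] (n::nat) \<in> F"
  using subF \<omega>F by (induct n) (auto intro: subringE(6)[OF subfieldE(1)[OF subF]] subringE(3)[OF subfieldE(1)[OF subF]])

definition const :: "'a \<Rightarrow> nat \<Rightarrow> 'a" where "const k = (\<lambda>i\<in>{..<m}. k)"
definition e :: "nat \<Rightarrow> nat \<Rightarrow> 'a" where "e j = (\<lambda>i\<in>{..<m}. if i = j then \<one> else \<zero>)"
definition T :: "(nat \<Rightarrow> 'a) \<Rightarrow> nat \<Rightarrow> 'a" where
  "T w = (\<lambda>i\<in>{..<m}. if i = 0 then a \<otimes> \<sigma> (w (m - 1)) else \<sigma> (w (i - 1)))"

lemma carrierR_iff: "w \<in> carrier R \<longleftrightarrow> (\<forall>i<m. w i \<in> carrier K) \<and> w \<in> extensional {..<m}"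
  by (auto simp: PR_simps PiE_iff)

lemma carrierR_eqI: "v \<in> carrier R \<Longrightarrow> w \<in> carrier R \<Longrightarrow> (\<And>i. i < m \<Longrightarrow> v i = w i) \<Longrightarrow> v = w"
  by (auto simp: carrierR_iff extensional_def intro!: ext) (metis)

lemma carrierR_K: "w \<in> carrier R \<Longrightarrow> i < m \<Longrightarrow> w i \<in> carrier K"
  by (auto simp: carrierR_iff)

lemma const_closed[simp]: "k \<in> carrier K \<Longrightarrow> const k \<in> carrier R"
  by (auto simp: const_def PR_simps)
lemma e_closed[simp]: "e j \<in> carrier R"
  by (auto simp: e_def PR_simps)
lemma T_closed[simp]: "w \<in> carrier R \<Longrightarrow> T w \<in> carrier R"
  using m0 by (auto simp: T_def PR_simps PiE_iff aK)
lemma Tn_closed[simp]: "w \<in> carrier R \<Longrightarrow> (T^^n) w \<in> carrier R"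
  by (induct n) auto

lemma T_add: "v \<in> carrier R \<Longrightarrow> w \<in> carrier R \<Longrightarrow> T (v \<oplus>\<^bsub>R\<^esub> w) = T v \<oplus>\<^bsub>R\<^esub> T w"
  using m0 by (auto simp: T_def PR_simps PiE_iff aK K.r_distr intro!: ext)

lemma T_smult: "k \<in> carrier K \<Longrightarrow> w \<in> carrier R \<Longrightarrow> T (const k \<otimes>\<^bsub>R\<^esub> w) = const (\<sigma> k) \<otimes>\<^bsub>R\<^esub> T w"
  using m0 by (auto simp: T_def const_def PR_simps PiE_iff aK K.m_lcomm intro!: ext)

lemma Tn_add: "v \<in> carrier R \<Longrightarrow> w \<in> carrier R \<Longrightarrow> (T^^n) (v \<oplus>\<^bsub>R\<^esub> w) = (T^^n) v \<oplus>\<^bsub>R\<^esub> (T^^n) w"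
  by (induct n) (auto simp: T_add)

lemma Tn_smult: "k \<in> carrier K \<Longrightarrow> w \<in> carrier R \<Longrightarrow> (T^^n) (const k \<otimes>\<^bsub>R\<^esub> w) = const ((\<sigma>^^n) k) \<otimes>\<^bsub>R\<^esub> (T^^n) w"
  by (induct n) (auto simp: T_smult)

lemma Tn_formula:
  assumes w: "w \<in> carrier R" and n: "n \<le> m" and i: "i < m"
  shows "(T^^n) w i = (if n \<le> i then (\<sigma>^^n) (w (i - n)) else (\<sigma>^^i) a \<otimes> (\<sigma>^^n) (w (m + i - n)))"
  using n i
proof (induct n arbitrary: i)
  case 0 then show ?case by simp
next
  case (Suc n)
  have wK: "\<And>j. j < m \<Longrightarrow> w j \<in> carrier K" using w carrierR_K by blast
  show ?case
  proof (cases "i = 0")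
    case True
    then have "(T^^Suc n) w i = a \<otimes> \<sigma> ((T^^n) w (m - 1))"
      using Suc m0 by (simp add: T_def)
    also have "(T^^n) w (m - 1) = (\<sigma>^^n) (w (m - Suc n))"
    proof -
      have "n \<le> m - 1" using Suc.prems by simp
      moreover have "m - 1 - n = m - Suc n" by simp
      ultimately show ?thesis using Suc.hyps[of "m - 1"] Suc.prems m0
        by simp
    qed
    finally show ?thesis using True Suc.prems wK
      by simp
  next
    case False
    have i1: "i - 1 < m" "n \<le> m" using Suc.prems by auto
    have s1: "(T^^Suc n) w i = \<sigma> ((T^^n) w (i - 1))"
      using False Suc.prems by (simp add: T_def)
    have IH: "(T^^n) w (i - 1) = (if n \<le> i - 1 then (\<sigma>^^n) (w (i - 1 - n)) else (\<sigma>^^(i - 1)) a \<otimes> (\<sigma>^^n) (w (m + (i - 1) - n)))"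
      by (rule Suc.hyps[OF i1(2) i1(1)])
    show ?thesis
    proof (cases "n \<le> i - 1")
      case True
      then have "Suc n \<le> i" "i - 1 - n = i - Suc n" using False by auto
      then show ?thesis using s1 IH True by simp
    next
      case c2: False
      have x1: "\<not> Suc n \<le> i" "m + (i - 1) - n = m + i - Suc n" "Suc (i - 1) = i" using c2 False Suc.prems by auto
      have x2: "m + i - Suc n < m" using c2 False Suc.prems by auto
      have "(T^^Suc n) w i = \<sigma> ((\<sigma>^^(i - 1)) a \<otimes> (\<sigma>^^n) (w (m + i - Suc n)))"
        using s1 IH c2 x1 by simp
      also have "\<dots> = (\<sigma>^^i) a \<otimes> (\<sigma>^^Suc n) (w (m + i - Suc n))"
      proof -
        have "\<sigma> ((\<sigma>^^(i - 1)) a) = (\<sigma>^^Suc (i - 1)) a" by simp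
        also have "\<dots> = (\<sigma>^^i) a" using x1(3) by simp
        finally show ?thesis using wK[OF x2] aK by simp
      qed
      finally show ?thesis using x1 by simp
    qed
  qed
qed

lemma Phi: "w \<in> carrier R \<Longrightarrow> (T^^m) w = (\<lambda>i\<in>{..<m}. (\<sigma>^^i) a \<otimes> w i)"
  apply (rule carrierR_eqI)
    apply simp
   apply (auto simp: PR_simps PiE_iff aK carrierR_K)[1]
  apply (subst Tn_formula)
     apply (auto simp: \<sigma>m carrierR_K)
  done

end

context cyc
begin

primrec Ls :: "(nat \<Rightarrow> 'a) \<Rightarrow> nat \<Rightarrow> (nat \<Rightarrow> 'a) list" where
  "Ls y 0 = []" | "Ls y (Suc n) = (T^^n) y # Ls y n"
primrec cs :: "(nat \<Rightarrow> 'a) \<Rightarrow> nat \<Rightarrow> (nat \<Rightarrow> 'a) list" where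
  "cs x 0 = []" | "cs x (Suc n) = const (x n) # cs x n"

definition comb :: "(nat \<Rightarrow> 'a) \<Rightarrow> (nat \<Rightarrow> 'a) \<Rightarrow> nat \<Rightarrow> nat \<Rightarrow> 'a" where
  "comb x y n = R.combine (cs x n) (Ls y n)"

definition mul :: "(nat \<Rightarrow> 'a) \<Rightarrow> (nat \<Rightarrow> 'a) \<Rightarrow> nat \<Rightarrow> 'a" where
  "mul x y = comb x y m"

definition iota :: "'a \<Rightarrow> nat \<Rightarrow> 'a" where
  "iota k = (\<lambda>i\<in>{..<m}. if i = 0 then k else \<zero>)"

definition A :: "('a, nat \<Rightarrow> 'a) module" where
  "A = \<lparr>carrier = carrier R, monoid.mult = mul, one = e 0, ring.zero = \<zero>\<^bsub>R\<^esub>,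
        ring.add = (\<oplus>\<^bsub>R\<^esub>), smult = (\<lambda>c x. const c \<otimes>\<^bsub>R\<^esub> x)\<rparr>"

lemma A_simps: "carrier A = carrier R" "x \<otimes>\<^bsub>A\<^esub> y = mul x y" "\<one>\<^bsub>A\<^esub> = e 0" "\<zero>\<^bsub>A\<^esub> = \<zero>\<^bsub>R\<^esub>"
  "x \<oplus>\<^bsub>A\<^esub> y = x \<oplus>\<^bsub>R\<^esub> y" "c \<odot>\<^bsub>A\<^esub> x = const c \<otimes>\<^bsub>R\<^esub> x"
  by (simp_all add: A_def)

lemma comb_Suc: "comb x y (Suc n) = const (x n) \<otimes>\<^bsub>R\<^esub> (T^^n) y \<oplus>\<^bsub>R\<^esub> comb x y n"
  by (simp add: comb_def)
lemma comb_0: "comb x y 0 = \<zero>\<^bsub>R\<^esub>"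
  by (simp add: comb_def)

lemma set_Ls: "y \<in> carrier R \<Longrightarrow> set (Ls y n) \<subseteq> carrier R"
  by (induct n) auto
lemma set_cs: "x \<in> carrier R \<Longrightarrow> n \<le> m \<Longrightarrow> set (cs x n) \<subseteq> carrier R"
  by (induct n) (auto simp: carrierR_K)
lemma length_Ls[simp]: "length (Ls y n) = n" by (induct n) auto
lemma length_cs[simp]: "length (cs x n) = n" by (induct n) auto

lemma comb_closed: "x \<in> carrier R \<Longrightarrow> y \<in> carrier R \<Longrightarrow> n \<le> m \<Longrightarrow> comb x y n \<in> carrier R"
  by (induct n) (auto simp: comb_Suc comb_0 carrierR_K)

lemma const_add: "k \<in> carrier K \<Longrightarrow> l \<in> carrier K \<Longrightarrow> const (k \<oplus> l) = const k \<oplus>\<^bsub>R\<^esub> const l"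
  by (auto simp: const_def PR_simps intro!: ext)
lemma const_mult: "k \<in> carrier K \<Longrightarrow> l \<in> carrier K \<Longrightarrow> const (k \<otimes> l) = const k \<otimes>\<^bsub>R\<^esub> const l"
  by (auto simp: const_def PR_simps intro!: ext)
lemma const_zero: "const \<zero> = \<zero>\<^bsub>R\<^esub>"
  by (auto simp: const_def PR_simps intro!: ext)
lemma const_one: "const \<one> = \<one>\<^bsub>R\<^esub>"
  by (auto simp: const_def PR_simps intro!: ext)

lemma R_add_apply: "i < m \<Longrightarrow> (v \<oplus>\<^bsub>R\<^esub> w) i = v i \<oplus> w i" by (simp add: PR_simps)
lemma R_mult_apply: "i < m \<Longrightarrow> (v \<otimes>\<^bsub>R\<^esub> w) i = v i \<otimes> w i" by (simp add: PR_simps)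
lemma const_apply: "i < m \<Longrightarrow> const k i = k" by (simp add: const_def)

lemma comb_ladd: "x \<in> carrier R \<Longrightarrow> y \<in> carrier R \<Longrightarrow> z \<in> carrier R \<Longrightarrow> n \<le> m \<Longrightarrow>
   comb (x \<oplus>\<^bsub>R\<^esub> y) z n = comb x z n \<oplus>\<^bsub>R\<^esub> comb y z n"
proof (induct n)
  case 0 then show ?case by (simp add: comb_0)
next
  case (Suc n)
  have xn: "x n \<in> carrier K" "y n \<in> carrier K" using Suc carrierR_K by auto
  have c: "comb x z n \<in> carrier R" "comb y z n \<in> carrier R" using Suc comb_closed by auto
  have "comb (x \<oplus>\<^bsub>R\<^esub> y) z (Suc n) = (const (x n) \<oplus>\<^bsub>R\<^esub> const (y n)) \<otimes>\<^bsub>R\<^esub> (T^^n) z \<oplus>\<^bsub>R\<^esub> (comb x z n \<oplus>\<^bsub>R\<^esub> comb y z n)"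
    using Suc xn by (simp add: comb_Suc R_add_apply const_add)
  also have "\<dots> = comb x z (Suc n) \<oplus>\<^bsub>R\<^esub> comb y z (Suc n)"
    using Suc xn c by (simp add: comb_Suc R.l_distr R.a_ac)
  finally show ?case .
qed

lemma comb_radd: "x \<in> carrier R \<Longrightarrow> y \<in> carrier R \<Longrightarrow> z \<in> carrier R \<Longrightarrow> n \<le> m \<Longrightarrow>
   comb x (y \<oplus>\<^bsub>R\<^esub> z) n = comb x y n \<oplus>\<^bsub>R\<^esub> comb x z n"
proof (induct n)
  case 0 then show ?case by (simp add: comb_0)
next
  case (Suc n)
  have xn: "x n \<in> carrier K" using Suc carrierR_K by auto
  have c: "comb x y n \<in> carrier R" "comb x z n \<in> carrier R" using Suc comb_closed by auto
  show ?case
    using Suc xn c by (simp add: comb_Suc Tn_add R.r_distr R.a_ac)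
qed

lemma comb_lsmult: "x \<in> carrier R \<Longrightarrow> y \<in> carrier R \<Longrightarrow> k \<in> carrier K \<Longrightarrow> n \<le> m \<Longrightarrow>
   comb (const k \<otimes>\<^bsub>R\<^esub> x) y n = const k \<otimes>\<^bsub>R\<^esub> comb x y n"
proof (induct n)
  case 0 then show ?case by (simp add: comb_0)
next
  case (Suc n)
  have xn: "x n \<in> carrier K" using Suc carrierR_K by auto
  have c: "comb x y n \<in> carrier R" using Suc comb_closed by auto
  have "comb (const k \<otimes>\<^bsub>R\<^esub> x) y (Suc n) = (const k \<otimes>\<^bsub>R\<^esub> const (x n)) \<otimes>\<^bsub>R\<^esub> (T^^n) y \<oplus>\<^bsub>R\<^esub> const k \<otimes>\<^bsub>R\<^esub> comb x y n"
    using Suc xn by (simp add: comb_Suc R_mult_apply const_mult const_apply)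
  also have "\<dots> = const k \<otimes>\<^bsub>R\<^esub> comb x y (Suc n)"
    using Suc xn c by (simp add: comb_Suc R.r_distr R.m_assoc)
  finally show ?case .
qed

lemma comb_rsmult: "x \<in> carrier R \<Longrightarrow> y \<in> carrier R \<Longrightarrow> k \<in> F \<Longrightarrow> n \<le> m \<Longrightarrow>
   comb x (const k \<otimes>\<^bsub>R\<^esub> y) n = const k \<otimes>\<^bsub>R\<^esub> comb x y n"
proof (induct n)
  case 0 then show ?case using FK by (auto simp: comb_0)
next
  case (Suc n)
  have xn: "x n \<in> carrier K" using Suc carrierR_K by auto
  have k: "k \<in> carrier K" using Suc FK by auto
  have c: "comb x y n \<in> carrier R" using Suc comb_closed by auto
  have t: "(T^^n) (const k \<otimes>\<^bsub>R\<^esub> y) = const k \<otimes>\<^bsub>R\<^esub> (T^^n) y"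
    using Tn_smult[OF k Suc(3)] Suc(4) by simp
  show ?case
    using Suc xn c k by (simp add: comb_Suc t R.r_distr R.m_lcomm)
qed

lemma comb_iota: "y \<in> carrier R \<Longrightarrow> k \<in> carrier K \<Longrightarrow> 0 < n \<Longrightarrow> n \<le> m \<Longrightarrow>
   comb (iota k) y n = const k \<otimes>\<^bsub>R\<^esub> y"
proof (induct n)
  case 0 then show ?case by simp
next
  case (Suc n)
  show ?case
  proof (cases "n = 0")
    case True then show ?thesis using Suc m0 by (simp add: comb_Suc comb_0 iota_def)
  next
    case False
    then have z: "iota k n = \<zero>" using Suc.prems by (simp add: iota_def)
    have IH: "comb (iota k) y n = const k \<otimes>\<^bsub>R\<^esub> y" using Suc.hyps Suc.prems False by simp
    have "comb (iota k) y (Suc n) = const (iota k n) \<otimes>\<^bsub>R\<^esub> (T^^n) y \<oplus>\<^bsub>R\<^esub> comb (iota k) y n"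
      by (rule comb_Suc)
    also have "\<dots> = \<zero>\<^bsub>R\<^esub> \<otimes>\<^bsub>R\<^esub> (T^^n) y \<oplus>\<^bsub>R\<^esub> const k \<otimes>\<^bsub>R\<^esub> y"
      by (simp only: z IH const_zero)
    also have "\<dots> = const k \<otimes>\<^bsub>R\<^esub> y" using Suc.prems by simp
    finally show ?thesis .
  qed
qed

lemma Tn_e0: "i < m \<Longrightarrow> (T^^i) (e 0) = e i"
  apply (rule carrierR_eqI)
    apply simp
   apply simp
  apply (subst Tn_formula[OF e_closed])
    apply simp_all
  apply (auto simp: e_def aK)
  done

lemma comb_e0: "x \<in> carrier R \<Longrightarrow> n \<le> m \<Longrightarrow> comb x (e 0) n = (\<lambda>i\<in>{..<m}. if i < n then x i else \<zero>)"
proof (induct n)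
  case 0 then show ?case by (simp add: comb_0 PR_simps)
next
  case (Suc n)
  have xn: "x n \<in> carrier K" using Suc carrierR_K by auto
  have nm: "n < m" using Suc by simp
  have "comb x (e 0) (Suc n) = const (x n) \<otimes>\<^bsub>R\<^esub> e n \<oplus>\<^bsub>R\<^esub> (\<lambda>i\<in>{..<m}. if i < n then x i else \<zero>)"
    using Suc nm by (simp only: comb_Suc Tn_e0)
  also have "\<dots> = (\<lambda>i\<in>{..<m}. if i < Suc n then x i else \<zero>)"
    apply (rule ext)
    subgoal for i using xn carrierR_K[OF Suc.prems(1), of i]
      by (cases "i < m"; cases "i < n"; cases "i = n") (simp_all add: PR_simps const_def e_def)
    done
  finally show ?case .
qed

lemma mul_e0: "x \<in> carrier R \<Longrightarrow> mul x (e 0) = x"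
  unfolding mul_def
  by (subst comb_e0) (auto simp: carrierR_iff extensional_def intro!: ext)

lemma e0_mul: "x \<in> carrier R \<Longrightarrow> mul (e 0) x = x"
proof -
  assume x: "x \<in> carrier R"
  have "e 0 = iota \<one>" by (simp add: e_def iota_def)
  then show ?thesis using x m0 by (simp add: mul_def comb_iota const_one)
qed

end

context cyc
begin

lemma mod_gen:
  fixes S :: "('a, 'c) ring_scheme" and M :: "('a, nat \<Rightarrow> 'a, 'd) module_scheme"
  assumes S: "cring S" "carrier S \<subseteq> carrier K"
    and Sops: "\<And>x y. x \<otimes>\<^bsub>S\<^esub> y = x \<otimes> y" "\<And>x y. x \<oplus>\<^bsub>S\<^esub> y = x \<oplus> y" "\<one>\<^bsub>S\<^esub> = \<one>"
    and M: "carrier M = carrier R" "\<And>x y. x \<oplus>\<^bsub>M\<^esub> y = x \<oplus>\<^bsub>R\<^esub> y" "\<zero>\<^bsub>M\<^esub> = \<zero>\<^bsub>R\<^esub>"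
    and Msm: "\<And>c x. c \<in> carrier S \<Longrightarrow> x \<in> carrier R \<Longrightarrow> c \<odot>\<^bsub>M\<^esub> x = const c \<otimes>\<^bsub>R\<^esub> x"
  shows "module S M"
proof (rule moduleI)
  show "cring S" by (rule S(1))
  show "abelian_group M"
    apply (rule abelian_groupI)
         apply (simp_all add: M R.a_ac)
    done
next
  fix c d x y assume c: "c \<in> carrier S" and d: "d \<in> carrier S" and x: "x \<in> carrier M" and y: "y \<in> carrier M"
  have cK: "c \<in> carrier K" and dK: "d \<in> carrier K" using c d S by auto
  have cd: "c \<oplus>\<^bsub>S\<^esub> d \<in> carrier S" "c \<otimes>\<^bsub>S\<^esub> d \<in> carrier S"
    using c d cring.axioms(1)[OF S(1)] by (auto intro: ring.ring_simprules)
  show "c \<odot>\<^bsub>M\<^esub> x \<in> carrier M" using c x cK by (simp add: Msm M)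
  show "(c \<oplus>\<^bsub>S\<^esub> d) \<odot>\<^bsub>M\<^esub> x = c \<odot>\<^bsub>M\<^esub> x \<oplus>\<^bsub>M\<^esub> d \<odot>\<^bsub>M\<^esub> x"
    using c d x cK dK cd by (simp add: Msm M Sops const_add R.l_distr)
  show "c \<odot>\<^bsub>M\<^esub> (x \<oplus>\<^bsub>M\<^esub> y) = c \<odot>\<^bsub>M\<^esub> x \<oplus>\<^bsub>M\<^esub> c \<odot>\<^bsub>M\<^esub> y"
    using c x y cK by (simp add: Msm M R.r_distr)
  show "(c \<otimes>\<^bsub>S\<^esub> d) \<odot>\<^bsub>M\<^esub> x = c \<odot>\<^bsub>M\<^esub> (d \<odot>\<^bsub>M\<^esub> x)"
    using c d x cK dK cd by (simp add: Msm M Sops const_mult R.m_assoc)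
next
  fix x assume x: "x \<in> carrier M"
  have "\<one>\<^bsub>S\<^esub> \<in> carrier S" using cring.axioms(1)[OF S(1)] by (auto intro: ring.ring_simprules)
  then show "\<one>\<^bsub>S\<^esub> \<odot>\<^bsub>M\<^esub> x = x" using x by (simp add: Msm M Sops const_one)
qed

lemma KF_cring: "cring (K\<lparr>carrier := F\<rparr>)"
  using K.subfield_iff(2)[OF subF] by (simp add: field.axioms(1) domain.axioms(1))

lemma mul_iota: "k \<in> carrier K \<Longrightarrow> y \<in> carrier R \<Longrightarrow> mul (iota k) y = const k \<otimes>\<^bsub>R\<^esub> y"
  unfolding mul_def using m0 by (simp add: comb_iota)

lemma iota_closed[simp]: "k \<in> carrier K \<Longrightarrow> iota k \<in> carrier R"
  by (auto simp: iota_def PR_simps)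

lemma mul_closed: "x \<in> carrier R \<Longrightarrow> y \<in> carrier R \<Longrightarrow> mul x y \<in> carrier R"
  unfolding mul_def by (simp add: comb_closed)

lemma A_nonassoc: "nonassoc_algebra K F A"
  unfolding nonassoc_algebra_def
proof (intro conjI ballI)
  show "module (K\<lparr>carrier := F\<rparr>) A"
    by (rule mod_gen) (auto simp: KF_cring FK A_simps)
  fix x y z assume x: "x \<in> carrier A" and y: "y \<in> carrier A" and z: "z \<in> carrier A"
  show "x \<otimes>\<^bsub>A\<^esub> y \<in> carrier A" using x y by (simp add: A_simps mul_closed)
  show "x \<otimes>\<^bsub>A\<^esub> (y \<oplus>\<^bsub>A\<^esub> z) = x \<otimes>\<^bsub>A\<^esub> y \<oplus>\<^bsub>A\<^esub> x \<otimes>\<^bsub>A\<^esub> z"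
    using x y z by (simp add: A_simps mul_def comb_radd)
  show "(y \<oplus>\<^bsub>A\<^esub> z) \<otimes>\<^bsub>A\<^esub> x = y \<otimes>\<^bsub>A\<^esub> x \<oplus>\<^bsub>A\<^esub> z \<otimes>\<^bsub>A\<^esub> x"
    using x y z by (simp add: A_simps mul_def comb_ladd)
next
  fix c x y assume c: "c \<in> F" and x: "x \<in> carrier A" and y: "y \<in> carrier A"
  have cK: "c \<in> carrier K" using c FK by auto
  show "c \<odot>\<^bsub>A\<^esub> (x \<otimes>\<^bsub>A\<^esub> y) = (c \<odot>\<^bsub>A\<^esub> x) \<otimes>\<^bsub>A\<^esub> y"
    using x y cK by (simp add: A_simps mul_def comb_lsmult)
  show "c \<odot>\<^bsub>A\<^esub> (x \<otimes>\<^bsub>A\<^esub> y) = x \<otimes>\<^bsub>A\<^esub> (c \<odot>\<^bsub>A\<^esub> y)"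
    using x y c by (simp add: A_simps mul_def comb_rsmult)
next
  show "\<one>\<^bsub>A\<^esub> \<in> carrier A" by (simp add: A_simps)
next
  fix x assume x: "x \<in> carrier A"
  show "\<one>\<^bsub>A\<^esub> \<otimes>\<^bsub>A\<^esub> x = x" using x by (simp add: A_simps e0_mul)
  show "x \<otimes>\<^bsub>A\<^esub> \<one>\<^bsub>A\<^esub> = x" using x by (simp add: A_simps mul_e0)
qed

lemma iota_hom: "iota \<in> ring_hom K A"
  unfolding ring_hom_def
proof (intro CollectI conjI allI impI)
  show "iota \<in> carrier K \<rightarrow> carrier A" by (auto simp: A_simps)
  fix x y assume xy: "x \<in> carrier K \<and> y \<in> carrier K"
  have "iota x \<otimes>\<^bsub>A\<^esub> iota y = const x \<otimes>\<^bsub>R\<^esub> iota y"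
    using xy by (simp add: A_simps mul_iota)
  then show "iota (x \<otimes> y) = iota x \<otimes>\<^bsub>A\<^esub> iota y"
    using xy by (auto simp: iota_def const_def PR_simps intro!: ext)
  show "iota (x \<oplus> y) = iota x \<oplus>\<^bsub>A\<^esub> iota y"
    using xy by (auto simp: A_simps iota_def PR_simps intro!: ext)
next
  show "iota \<one> = \<one>\<^bsub>A\<^esub>" by (simp add: A_simps iota_def e_def)
qed

lemma iota_inj: "inj_on iota (carrier K)"
proof (rule inj_onI)
  fix x y assume "iota x = iota y"
  then have "iota x 0 = iota y 0" by simp
  then show "x = y" using m0 by (simp add: iota_def)
qed

lemma iota_F: "c \<in> F \<Longrightarrow> k \<in> carrier K \<Longrightarrow> iota (c \<otimes> k) = c \<odot>\<^bsub>A\<^esub> iota k"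
  using FK by (auto simp: A_simps iota_def const_def PR_simps intro!: ext)

lemma finsum_AR: "finsum A f S = finsum R f S"
  by (simp add: finsum_def finprod_def A_def)

lemma finsum_e: "c \<in> {..<m} \<rightarrow>\<^sub>E carrier K \<Longrightarrow> n \<le> m \<Longrightarrow>
   finsum R (\<lambda>i. iota (c i) \<otimes>\<^bsub>A\<^esub> e i) {..<n} = (\<lambda>j\<in>{..<m}. if j < n then c j else \<zero>)"
proof (induct n)
  case 0 then show ?case by (simp add: PR_simps)
next
  case (Suc n)
  have cK: "\<And>i. i < m \<Longrightarrow> c i \<in> carrier K" using Suc.prems by auto
  have f: "(\<lambda>i. iota (c i) \<otimes>\<^bsub>A\<^esub> e i) \<in> {..<n} \<rightarrow> carrier R"
    using Suc.prems cK by (auto simp: A_simps mul_closed)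
  have fn: "iota (c n) \<otimes>\<^bsub>A\<^esub> e n \<in> carrier R" using Suc.prems cK by (auto simp: A_simps mul_closed)
  have "finsum R (\<lambda>i. iota (c i) \<otimes>\<^bsub>A\<^esub> e i) {..<Suc n} = (iota (c n) \<otimes>\<^bsub>A\<^esub> e n) \<oplus>\<^bsub>R\<^esub> finsum R (\<lambda>i. iota (c i) \<otimes>\<^bsub>A\<^esub> e i) {..<n}"
    unfolding lessThan_Suc using f fn by (simp add: R.finsum_insert)
  also have "\<dots> = (const (c n) \<otimes>\<^bsub>R\<^esub> e n) \<oplus>\<^bsub>R\<^esub> (\<lambda>j\<in>{..<m}. if j < n then c j else \<zero>)"
  proof -
    have IH: "finsum R (\<lambda>i. iota (c i) \<otimes>\<^bsub>A\<^esub> e i) {..<n} = (\<lambda>j\<in>{..<m}. if j < n then c j else \<zero>)"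
      using Suc.prems by (intro Suc.hyps) auto
    have m1: "iota (c n) \<otimes>\<^bsub>A\<^esub> e n = const (c n) \<otimes>\<^bsub>R\<^esub> e n" using cK Suc.prems by (simp add: A_simps mul_iota)
    show ?thesis by (simp only: IH m1)
  qed
  also have "\<dots> = (\<lambda>j\<in>{..<m}. if j < Suc n then c j else \<zero>)"
    apply (rule ext)
    subgoal for j using cK[of j] cK[of n] Suc.prems
      by (cases "j < m"; cases "j < n"; cases "j = n") (simp_all add: PR_simps const_def e_def)
    done
  finally show ?case .
qed

lemma A_free: "free_left_module_rank K iota A m"
  unfolding free_left_module_rank_def
proof (intro conjI exI[of _ e] allI impI ballI)
  show "module K (A\<lparr>smult := \<lambda>d x. iota d \<otimes>\<^bsub>A\<^esub> x\<rparr>)"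
    by (rule mod_gen) (auto simp: K.cring_axioms A_simps A_def mul_iota)
  fix i show "e i \<in> carrier A" by (simp add: A_simps)
next
  fix x assume x: "x \<in> carrier A"
  then have xR: "x \<in> carrier R" by (simp add: A_simps)
  have xc: "x \<in> {..<m} \<rightarrow>\<^sub>E carrier K" using xR by (simp add: PR_simps)
  show "\<exists>!c. c \<in> {..<m} \<rightarrow>\<^sub>E carrier K \<and> x = finsum A (\<lambda>i. iota (c i) \<otimes>\<^bsub>A\<^esub> e i) {..<m}"
  proof (rule ex1I[of _ x])
    have "finsum A (\<lambda>i. iota (x i) \<otimes>\<^bsub>A\<^esub> e i) {..<m} = (\<lambda>j\<in>{..<m}. if j < m then x j else \<zero>)"
      using xc by (simp add: finsum_AR finsum_e)
    also have "\<dots> = x" using xc by (auto simp: PiE_iff extensional_def intro!: ext)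
    finally show "x \<in> {..<m} \<rightarrow>\<^sub>E carrier K \<and> x = finsum A (\<lambda>i. iota (x i) \<otimes>\<^bsub>A\<^esub> e i) {..<m}"
      using xc by simp
  next
    fix c assume c: "c \<in> {..<m} \<rightarrow>\<^sub>E carrier K \<and> x = finsum A (\<lambda>i. iota (c i) \<otimes>\<^bsub>A\<^esub> e i) {..<m}"
    then have "x = (\<lambda>j\<in>{..<m}. if j < m then c j else \<zero>)" by (simp add: finsum_AR finsum_e)
    also have "\<dots> = c" using c by (auto simp: PiE_iff extensional_def intro!: ext)
    finally show "c = x" by simp
  qed
qed

end

context cyc
begin

definition hw :: "(nat \<Rightarrow> 'a) \<Rightarrow> nat \<Rightarrow> 'a" where
  "hw x = (\<lambda>i\<in>{..<m}. \<omega> [^] i \<otimes> x i)"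
definition Hm :: "(nat \<Rightarrow> 'a) \<Rightarrow> nat \<Rightarrow> 'a" where
  "Hm = (\<lambda>x\<in>carrier R. hw x)"

lemma \<omega>pow_K[simp]: "\<omega> [^] (n::nat) \<in> carrier K" by simp

lemma \<sigma>_\<omega>pow[simp]: "\<sigma> (\<omega> [^] (n::nat)) = \<omega> [^] n"
  using \<omega>pow_F by simp
lemma \<sigma>n_\<omega>pow[simp]: "(\<sigma>^^k) (\<omega> [^] (n::nat)) = \<omega> [^] n"
  using \<omega>pow_F by simp

lemma hw_closed[simp]: "x \<in> carrier R \<Longrightarrow> hw x \<in> carrier R"
  unfolding hw_def by (simp add: PR_simps PiE_iff)

lemma hw_apply: "i < m \<Longrightarrow> hw x i = \<omega> [^] i \<otimes> x i"
  by (simp add: hw_def)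

lemma hw_add: "x \<in> carrier R \<Longrightarrow> y \<in> carrier R \<Longrightarrow> hw (x \<oplus>\<^bsub>R\<^esub> y) = hw x \<oplus>\<^bsub>R\<^esub> hw y"
  apply (rule carrierR_eqI)
    apply simp
   apply simp
  apply (simp only: hw_apply R_add_apply)
  apply (rule K.r_distr)
    apply (simp_all add: carrierR_K)
  done

lemma hw_smult: "k \<in> carrier K \<Longrightarrow> x \<in> carrier R \<Longrightarrow> hw (const k \<otimes>\<^bsub>R\<^esub> x) = const k \<otimes>\<^bsub>R\<^esub> hw x"
  apply (rule carrierR_eqI)
    apply simp
   apply simp
  apply (simp only: hw_apply R_mult_apply const_apply)
  apply (rule K.m_lcomm)
    apply (simp_all add: carrierR_K)
  done

lemma \<omega>_pow_m1: "\<omega> \<otimes> \<omega> [^] (m - Suc 0) = \<one>"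
proof -
  have "\<omega> \<otimes> \<omega> [^] (m - Suc 0) = \<omega> [^] (m - Suc 0) \<otimes> \<omega>" by (rule K.m_comm) simp_all
  also have "\<dots> = \<omega> [^] Suc (m - Suc 0)" by (simp only: K.nat_pow_Suc)
  also have "Suc (m - Suc 0) = m" using m0 by simp
  finally show ?thesis using \<omega>m by simp
qed

lemma \<omega>_pow_Suc': "\<omega> \<otimes> \<omega> [^] (n::nat) = \<omega> [^] Suc n"
proof -
  have "\<omega> \<otimes> \<omega> [^] n = \<omega> [^] n \<otimes> \<omega>" by (rule K.m_comm) simp_all
  also have "\<dots> = \<omega> [^] Suc n" by (simp only: K.nat_pow_Suc)
  finally show ?thesis .
qed

lemma T_apply0: "T w 0 = a \<otimes> \<sigma> (w (m - Suc 0))"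
  using m0 by (simp add: T_def)
lemma T_applyS: "0 < i \<Longrightarrow> i < m \<Longrightarrow> T w i = \<sigma> (w (i - 1))"
  by (simp add: T_def)

lemma hw_T: "y \<in> carrier R \<Longrightarrow> hw (T y) = const \<omega> \<otimes>\<^bsub>R\<^esub> T (hw y)"
proof (rule carrierR_eqI)
  assume y: "y \<in> carrier R"
  show "hw (T y) \<in> carrier R" using y by simp
  show "const \<omega> \<otimes>\<^bsub>R\<^esub> T (hw y) \<in> carrier R" using y by simp
  fix i assume i: "i < m"
  have ym: "y (m - Suc 0) \<in> carrier K" using y m0 carrierR_K by simp
  have mm: "m - Suc 0 < m" using m0 by simp
  show "hw (T y) i = (const \<omega> \<otimes>\<^bsub>R\<^esub> T (hw y)) i"
  proof (cases "i = 0")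
    case True
    have "(const \<omega> \<otimes>\<^bsub>R\<^esub> T (hw y)) i = \<omega> \<otimes> (a \<otimes> \<sigma> (\<omega> [^] (m - Suc 0) \<otimes> y (m - Suc 0)))"
      using True i by (simp only: R_mult_apply const_apply T_apply0 hw_apply[OF mm])
    also have "\<dots> = \<omega> \<otimes> (a \<otimes> (\<omega> [^] (m - Suc 0) \<otimes> \<sigma> (y (m - Suc 0))))"
      using ym by simp
    also have "\<dots> = (\<omega> \<otimes> \<omega> [^] (m - Suc 0)) \<otimes> (a \<otimes> \<sigma> (y (m - Suc 0)))"
      using ym aK by (simp add: K.m_ac)
    also have "\<dots> = a \<otimes> \<sigma> (y (m - Suc 0))" using ym aK by (simp add: \<omega>_pow_m1)
    also have "\<dots> = hw (T y) i"
      using True i ym aK by (simp add: hw_apply T_apply0)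
    finally show ?thesis by simp
  next
    case False
    have yi: "y (i - 1) \<in> carrier K" using y i carrierR_K by simp
    have im: "i - 1 < m" using i by simp
    have "(const \<omega> \<otimes>\<^bsub>R\<^esub> T (hw y)) i = \<omega> \<otimes> \<sigma> (\<omega> [^] (i - 1) \<otimes> y (i - 1))"
      using False i by (simp only: R_mult_apply const_apply T_applyS hw_apply[OF im] neq0_conv)
    also have "\<dots> = \<omega> \<otimes> (\<omega> [^] (i - 1) \<otimes> \<sigma> (y (i - 1)))"
      using yi by simp
    also have "\<dots> = \<omega> [^] Suc (i - 1) \<otimes> \<sigma> (y (i - 1))"
      using yi by (simp add: K.m_assoc[symmetric] \<omega>_pow_Suc')
    also have "Suc (i - 1) = i" using False by simp
    also have "\<omega> [^] i \<otimes> \<sigma> (y (i - 1)) = hw (T y) i"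
      using False i by (simp add: hw_apply T_applyS)
    finally show ?thesis by simp
  qed
qed

lemma hw_Tn: "y \<in> carrier R \<Longrightarrow> hw ((T^^n) y) = const (\<omega> [^] n) \<otimes>\<^bsub>R\<^esub> (T^^n) (hw y)"
proof (induct n)
  case 0
  have "const (\<omega> [^] (0::nat)) = \<one>\<^bsub>R\<^esub>" by (simp add: const_one)
  then show ?case using 0 by simp
next
  case (Suc n)
  have y: "y \<in> carrier R" by fact
  have z: "(T^^n) (hw y) \<in> carrier R" using y by simp
  have "hw ((T^^Suc n) y) = hw (T ((T^^n) y))" by simp
  also have "\<dots> = const \<omega> \<otimes>\<^bsub>R\<^esub> T (hw ((T^^n) y))"
    using y by (simp only: hw_T Tn_closed)
  also have "\<dots> = const \<omega> \<otimes>\<^bsub>R\<^esub> T (const (\<omega> [^] n) \<otimes>\<^bsub>R\<^esub> (T^^n) (hw y))"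
    using Suc by simp
  also have "T (const (\<omega> [^] n) \<otimes>\<^bsub>R\<^esub> (T^^n) (hw y)) = const (\<omega> [^] n) \<otimes>\<^bsub>R\<^esub> T ((T^^n) (hw y))"
    using T_smult[OF \<omega>pow_K z] by simp
  also have "const \<omega> \<otimes>\<^bsub>R\<^esub> (const (\<omega> [^] n) \<otimes>\<^bsub>R\<^esub> T ((T^^n) (hw y))) = (const \<omega> \<otimes>\<^bsub>R\<^esub> const (\<omega> [^] n)) \<otimes>\<^bsub>R\<^esub> T ((T^^n) (hw y))"
    using z by (simp add: R.m_assoc)
  also have "const \<omega> \<otimes>\<^bsub>R\<^esub> const (\<omega> [^] n) = const (\<omega> [^] Suc n)"
    by (simp add: const_mult[symmetric] \<omega>_pow_Suc')
  also have "T ((T^^n) (hw y)) = (T^^Suc n) (hw y)" by simp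
  finally show ?case .
qed

lemma hw_comb: "x \<in> carrier R \<Longrightarrow> y \<in> carrier R \<Longrightarrow> n \<le> m \<Longrightarrow> hw (comb x y n) = comb (hw x) (hw y) n"
proof (induct n)
  case 0
  have "hw \<zero>\<^bsub>R\<^esub> = \<zero>\<^bsub>R\<^esub>"
    by (rule carrierR_eqI) (simp_all only: hw_closed R.zero_closed hw_apply, simp add: PR_simps)
  then show ?case by (simp add: comb_0)
next
  case (Suc n)
  have x: "x \<in> carrier R" and y: "y \<in> carrier R" and n: "n < m" using Suc by auto
  have xn: "x n \<in> carrier K" using x n carrierR_K by auto
  have c: "comb x y n \<in> carrier R" using Suc comb_closed by auto
  have tn: "(T^^n) y \<in> carrier R" "(T^^n) (hw y) \<in> carrier R" using y by simp_all
  have "hw (comb x y (Suc n)) = hw (const (x n) \<otimes>\<^bsub>R\<^esub> (T^^n) y) \<oplus>\<^bsub>R\<^esub> hw (comb x y n)"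
    using xn c tn by (simp only: comb_Suc hw_add R.m_closed const_closed)
  also have "hw (comb x y n) = comb (hw x) (hw y) n" using Suc by simp
  also have "hw (const (x n) \<otimes>\<^bsub>R\<^esub> (T^^n) y) = const (x n) \<otimes>\<^bsub>R\<^esub> (const (\<omega> [^] n) \<otimes>\<^bsub>R\<^esub> (T^^n) (hw y))"
    using xn tn y by (simp only: hw_smult hw_Tn)
  also have "\<dots> = const (hw x n) \<otimes>\<^bsub>R\<^esub> (T^^n) (hw y)"
  proof -
    have "const (x n) \<otimes>\<^bsub>R\<^esub> (const (\<omega> [^] n) \<otimes>\<^bsub>R\<^esub> (T^^n) (hw y)) = (const (x n) \<otimes>\<^bsub>R\<^esub> const (\<omega> [^] n)) \<otimes>\<^bsub>R\<^esub> (T^^n) (hw y)"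
      using xn tn by (simp add: R.m_assoc)
    also have "const (x n) \<otimes>\<^bsub>R\<^esub> const (\<omega> [^] n) = const (hw x n)"
      using xn n by (simp add: const_mult[symmetric] hw_apply K.m_comm)
    finally show ?thesis .
  qed
  also have "const (hw x n) \<otimes>\<^bsub>R\<^esub> (T^^n) (hw y) \<oplus>\<^bsub>R\<^esub> comb (hw x) (hw y) n = comb (hw x) (hw y) (Suc n)"
    by (simp only: comb_Suc)
  finally show ?case .
qed

lemma hw_mul: "x \<in> carrier R \<Longrightarrow> y \<in> carrier R \<Longrightarrow> hw (mul x y) = mul (hw x) (hw y)"
  by (simp add: mul_def hw_comb)

lemma Hm_pow: "x \<in> carrier R \<Longrightarrow> (Hm^^n) x = (\<lambda>i\<in>{..<m}. \<omega> [^] (i * n) \<otimes> x i)"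
proof (induct n)
  case 0 then show ?case by (auto simp: carrierR_iff extensional_def intro!: ext)
next
  case (Suc n)
  have x: "x \<in> carrier R" by fact
  have cl: "(\<lambda>i\<in>{..<m}. \<omega> [^] (i * n) \<otimes> x i) \<in> carrier R"
    using x by (auto simp: PR_simps carrierR_K)
  have "(Hm^^Suc n) x = Hm ((Hm^^n) x)" by simp
  also have "\<dots> = Hm (\<lambda>i\<in>{..<m}. \<omega> [^] (i * n) \<otimes> x i)" by (simp only: Suc.hyps[OF x])
  also have "\<dots> = hw (\<lambda>i\<in>{..<m}. \<omega> [^] (i * n) \<otimes> x i)"
    using cl by (simp add: Hm_def)
  also have "\<dots> = (\<lambda>i\<in>{..<m}. \<omega> [^] (i * Suc n) \<otimes> x i)"
  proof (rule carrierR_eqI)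
    show "hw (\<lambda>i\<in>{..<m}. \<omega> [^] (i * n) \<otimes> x i) \<in> carrier R" using cl by simp
    show "(\<lambda>i\<in>{..<m}. \<omega> [^] (i * Suc n) \<otimes> x i) \<in> carrier R"
      using x by (auto simp: PR_simps carrierR_K)
    fix i assume i: "i < m"
    have xi: "x i \<in> carrier K" using x i carrierR_K by simp
    have "hw (\<lambda>i\<in>{..<m}. \<omega> [^] (i * n) \<otimes> x i) i = \<omega> [^] i \<otimes> (\<omega> [^] (i * n) \<otimes> x i)"
      using i by (simp add: hw_apply)
    also have "\<dots> = (\<omega> [^] i \<otimes> \<omega> [^] (i * n)) \<otimes> x i" using xi by (simp add: K.m_assoc)
    also have "\<omega> [^] i \<otimes> \<omega> [^] (i * n) = \<omega> [^] (i * Suc n)"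
      by (simp add: K.nat_pow_mult)
    finally have eq: "hw (\<lambda>i\<in>{..<m}. \<omega> [^] (i * n) \<otimes> x i) i = \<omega> [^] (i * Suc n) \<otimes> x i" .
    have h2: "(\<lambda>i\<in>{..<m}. \<omega> [^] (i * Suc n) \<otimes> x i) i = \<omega> [^] (i * Suc n) \<otimes> x i" using i by simp
    show "hw (\<lambda>i\<in>{..<m}. \<omega> [^] (i * n) \<otimes> x i) i = (\<lambda>i\<in>{..<m}. \<omega> [^] (i * Suc n) \<otimes> x i) i"
      by (rule trans[OF eq sym[OF h2]])
  qed
  finally show ?case .
qed

lemma Hm_m: "x \<in> carrier R \<Longrightarrow> (Hm^^m) x = x"
proof -
  assume x: "x \<in> carrier R"
  have "\<And>i. \<omega> [^] (i * m) = \<one>"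
  proof -
    fix i :: nat
    have "\<omega> [^] (i * m) = (\<omega> [^] m) [^] i" by (simp add: K.nat_pow_pow mult.commute)
    then show "\<omega> [^] (i * m) = \<one>" using \<omega>m by simp
  qed
  then show ?thesis using x
    by (auto simp: Hm_pow carrierR_iff extensional_def intro!: ext)
qed

lemma Hm_closed: "x \<in> carrier R \<Longrightarrow> Hm x \<in> carrier R" by (simp add: Hm_def)
lemma Hmn_closed: "x \<in> carrier R \<Longrightarrow> (Hm^^n) x \<in> carrier R" by (induct n) (auto simp: Hm_closed)

lemma Hm_bij: "bij_betw Hm (carrier R) (carrier R)"
proof (rule bij_betwI')
  fix x y assume x: "x \<in> carrier R" and y: "y \<in> carrier R"
  show "(Hm x = Hm y) = (x = y)"
  proof
    assume "Hm x = Hm y"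
    then have "(Hm^^(m - 1)) (Hm x) = (Hm^^(m - 1)) (Hm y)" by simp
    then have "(Hm^^Suc (m - 1)) x = (Hm^^Suc (m - 1)) y" by (simp add: funpow_swap1)
    then show "x = y" using m0 Hm_m x y by simp
  qed simp
next
  fix x assume "x \<in> carrier R" then show "Hm x \<in> carrier R" by (rule Hm_closed)
next
  fix y assume y: "y \<in> carrier R"
  have "Hm ((Hm^^(m - 1)) y) = (Hm^^Suc (m - 1)) y" by simp
  also have "\<dots> = y" using m0 Hm_m y by simp
  finally show "\<exists>x\<in>carrier R. y = Hm x" using y Hmn_closed by metis
qed

lemma Hm_Aut: "Hm \<in> Aut F A"
  unfolding Aut_def
proof (intro CollectI conjI ballI)
  show "bij_betw Hm (carrier A) (carrier A)" using Hm_bij by (simp add: A_simps)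
  show "Hm \<in> extensional (carrier A)" by (simp add: Hm_def A_simps)
  fix x y assume x: "x \<in> carrier A" and y: "y \<in> carrier A"
  show "Hm (x \<oplus>\<^bsub>A\<^esub> y) = Hm x \<oplus>\<^bsub>A\<^esub> Hm y" using x y by (simp add: A_simps Hm_def hw_add)
  show "Hm (x \<otimes>\<^bsub>A\<^esub> y) = Hm x \<otimes>\<^bsub>A\<^esub> Hm y" using x y by (simp add: A_simps Hm_def hw_mul mul_closed)
next
  fix c x assume c: "c \<in> F" and x: "x \<in> carrier A"
  then show "Hm (c \<odot>\<^bsub>A\<^esub> x) = c \<odot>\<^bsub>A\<^esub> Hm x" using FK by (auto simp: A_simps Hm_def hw_smult)
qed

definition gH :: "nat \<Rightarrow> (nat \<Rightarrow> 'a) \<Rightarrow> nat \<Rightarrow> 'a" where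
  "gH n = restrict (Hm^^n) (carrier R)"

lemma \<omega>_nz: "\<omega> \<noteq> \<zero>"
proof
  assume "\<omega> = \<zero>"
  then have "\<omega> [^] m = \<zero>" using m0 by (simp add: K.nat_pow_zero)
  then show False using \<omega>m by simp
qed

lemma \<omega>pow_nz: "\<omega> [^] (p::nat) \<noteq> \<zero>"
  by (induct p) (simp_all add: K.nat_pow_Suc K.integral_iff \<omega>_nz)

lemma \<omega>_pow_inj: "n < m \<Longrightarrow> n' < m \<Longrightarrow> \<omega> [^] n = \<omega> [^] n' \<Longrightarrow> n = n'"
proof (rule ccontr)
  assume *: "n < m" "n' < m" "\<omega> [^] n = \<omega> [^] n'" "n \<noteq> n'"
  { fix p q assume pq: "p < q" "q < m" "\<omega> [^] p = \<omega> [^] q"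
    have "\<omega> [^] p \<otimes> \<omega> [^] (q - p) = \<omega> [^] (p + (q - p))" by (simp add: K.nat_pow_mult)
    then have "\<omega> [^] q = \<omega> [^] p \<otimes> \<omega> [^] (q - p)" using pq by simp
    then have "\<omega> [^] p \<otimes> \<one> = \<omega> [^] p \<otimes> \<omega> [^] (q - p)" using pq by simp
    moreover have "\<omega> [^] p \<noteq> \<zero>" by (rule \<omega>pow_nz)
    ultimately have "\<omega> [^] (q - p) = \<one>"
      using K.m_lcancel[of "\<omega> [^] p" \<one> "\<omega> [^] (q - p)"] by simp
    then have False using \<omega>prim[of "q - p"] pq by simp }
  then show False using * by (metis linorder_neqE_nat)
qed

lemma orbit_card: "card {restrict (Hm^^i) (carrier A) | i. True} = m"
proof -
  have set_eq: "{restrict (Hm^^i) (carrier A) | i. True} = gH ` {..<m}"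
  proof
    show "gH ` {..<m} \<subseteq> {restrict (Hm^^i) (carrier A) | i. True}"
      by (auto simp: gH_def A_simps)
    show "{restrict (Hm^^i) (carrier A) | i. True} \<subseteq> gH ` {..<m}"
    proof
      fix f assume "f \<in> {restrict (Hm^^i) (carrier A) | i. True}"
      then obtain i where f: "f = restrict (Hm^^i) (carrier R)" by (auto simp: A_simps)
      have "(Hm^^i) = (Hm^^(i mod m)) \<circ> (Hm^^(m * (i div m)))"
        by (metis funpow_add mod_mult_div_eq)
      moreover have "\<And>x k. x \<in> carrier R \<Longrightarrow> (Hm^^(m * k)) x = x"
      proof -
        fix x k assume x: "x \<in> carrier R"
        show "(Hm^^(m * k)) x = x"
        proof (induct k)
          case 0 then show ?case by simp
        next
          case (Suc k)
          have "(Hm^^(m * Suc k)) x = (Hm^^m) ((Hm^^(m * k)) x)"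
            by (simp add: funpow_add)
          then show ?case using Suc x by (simp add: Hm_m)
        qed
      qed
      ultimately have "f = gH (i mod m)" using f by (auto simp: gH_def intro!: ext)
      then show "f \<in> gH ` {..<m}" using m0 by auto
    qed
  qed
  have inj: "inj_on gH {..<m}"
  proof (rule inj_onI)
    fix n n' assume n: "n \<in> {..<m}" and n': "n' \<in> {..<m}" and eq: "gH n = gH n'"
    have 1: "1 < m" using m2 by simp
    have "\<And>k. gH k (e 1) 1 = \<omega> [^] k"
    proof -
      fix k
      have "gH k (e 1) = (Hm^^k) (e 1)" by (simp add: gH_def)
      also have "\<dots> = (\<lambda>i\<in>{..<m}. \<omega> [^] (i * k) \<otimes> e 1 i)" by (rule Hm_pow) simp
      finally show "gH k (e 1) 1 = \<omega> [^] k" using 1 by (simp add: e_def)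
    qed
    then have "gH n (e 1) 1 = \<omega> [^] n" "gH n' (e 1) 1 = \<omega> [^] n'" by auto
    then have "\<omega> [^] n = \<omega> [^] n'" using eq by simp
    then show "n = n'" using n n' \<omega>_pow_inj by simp
  qed
  show ?thesis unfolding set_eq using card_image[OF inj] by simp
qed

lemma orbit_fix: "H \<in> {restrict (Hm^^i) (carrier A) | i. True} \<Longrightarrow> k \<in> carrier K \<Longrightarrow> H (iota k) = iota k"
proof -
  assume H: "H \<in> {restrict (Hm^^i) (carrier A) | i. True}" and k: "k \<in> carrier K"
  then obtain n where "H = restrict (Hm^^n) (carrier R)" by (auto simp: A_simps)
  then have "H (iota k) = (Hm^^n) (iota k)" using k by simp
  also have "\<dots> = (\<lambda>i\<in>{..<m}. \<omega> [^] (i * n) \<otimes> iota k i)" using k by (simp add: Hm_pow)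
  also have "\<dots> = iota k" using k by (auto simp: iota_def intro!: ext)
  finally show ?thesis .
qed

end

context cyc
begin

abbreviation "Kc \<equiv> const ` carrier K"
abbreviation "Fc \<equiv> const ` F"

lemma const_hom: "const \<in> ring_hom K R"
  by (rule ring_hom_memI) (auto simp: const_mult const_add const_one)

lemma const_hom_ring: "ring_hom_ring K R const"
  by (rule ring_hom_ringI2) (simp_all add: K.ring_axioms R.ring_axioms const_hom)

lemma R_one_nz: "\<one>\<^bsub>R\<^esub> \<noteq> \<zero>\<^bsub>R\<^esub>"
proof
  assume "\<one>\<^bsub>R\<^esub> = \<zero>\<^bsub>R\<^esub>"
  then have "\<one>\<^bsub>R\<^esub> 0 = \<zero>\<^bsub>R\<^esub> 0" by simp
  then show False using m0 by (simp add: PR_simps)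
qed

lemma Kc_sub: "subfield Kc R"
  using ring_hom_ring.img_is_subfield(2)[OF const_hom_ring K.carrier_is_subfield R_one_nz] .

lemma Fc_sub: "subfield Fc R"
  using ring_hom_ring.img_is_subfield(2)[OF const_hom_ring subF R_one_nz] .

lemma const_inj: "inj_on const (carrier K)"
proof (rule inj_onI)
  fix x y assume "const x = const y" then have "const x 0 = const y 0" by simp
  then show "x = y" using m0 by (simp add: const_def)
qed

lemma dim_Fc_Kc: "R.dimension m Fc Kc"
  using ring_hom_ring.inj_hom_dimension[OF const_hom_ring subF R_one_nz const_inj dimF] .

primrec Es :: "nat \<Rightarrow> (nat \<Rightarrow> 'a) list" where
  "Es 0 = []" | "Es (Suc n) = e n # Es n"

lemma set_Es: "set (Es n) \<subseteq> carrier R" by (induct n) auto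
lemma length_Es[simp]: "length (Es n) = n" by (induct n) auto

lemma Ls_e0: "n \<le> m \<Longrightarrow> Ls (e 0) n = Es n"
  by (induct n) (auto simp: Tn_e0)

lemma combine_Es_high: "set Ks \<subseteq> carrier R \<Longrightarrow> n \<le> i \<Longrightarrow> i < m \<Longrightarrow> R.combine Ks (Es n) i = \<zero>"
proof (induct n arbitrary: Ks)
  case 0 then show ?case by (simp add: PR_simps)
next
  case (Suc n)
  show ?case
  proof (cases Ks)
    case Nil then show ?thesis using Suc by (simp add: PR_simps)
  next
    case (Cons k Ks')
    have k: "k \<in> carrier R" and Ks': "set Ks' \<subseteq> carrier R" using Suc Cons by auto
    have "R.combine Ks (Es (Suc n)) i = (k \<otimes>\<^bsub>R\<^esub> e n) i \<oplus> R.combine Ks' (Es n) i"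
      using Cons Suc by (simp add: PR_simps)
    also have "R.combine Ks' (Es n) i = \<zero>" using Suc Ks' by simp
    also have "(k \<otimes>\<^bsub>R\<^esub> e n) i = \<zero>" using Suc k carrierR_K[OF k, of i] by (simp add: PR_simps e_def)
    finally show ?thesis by simp
  qed
qed

lemma Es_indep: "n \<le> m \<Longrightarrow> R.independent Kc (Es n)"
proof (induct n)
  case 0 then show ?case by simp
next
  case (Suc n)
  have nm: "n < m" using Suc by simp
  show ?case
  proof (rule R.trivial_combine_imp_independent)
    show "subfield Kc R" by (rule Kc_sub)
    show "set (Es (Suc n)) \<subseteq> carrier R" by (rule set_Es)
    fix Ks assume Ks: "set Ks \<subseteq> Kc" and c: "R.combine Ks (Es (Suc n)) = \<zero>\<^bsub>R\<^esub>"
    show "set (take (length (Es (Suc n))) Ks) \<subseteq> {\<zero>\<^bsub>R\<^esub>}"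
    proof (cases Ks)
      case Nil then show ?thesis by simp
    next
      case (Cons k Ks')
      obtain c0 where c0: "c0 \<in> carrier K" "k = const c0" using Ks Cons by auto
      have KsR: "set Ks' \<subseteq> carrier R" using Ks Cons by auto
      have eq: "const c0 \<otimes>\<^bsub>R\<^esub> e n \<oplus>\<^bsub>R\<^esub> R.combine Ks' (Es n) = \<zero>\<^bsub>R\<^esub>"
        using c Cons c0 by simp
      then have "(const c0 \<otimes>\<^bsub>R\<^esub> e n \<oplus>\<^bsub>R\<^esub> R.combine Ks' (Es n)) n = \<zero>"
        using nm by (simp add: PR_simps)
      then have "c0 = \<zero>" using nm c0 combine_Es_high[OF KsR, of n n] by (simp add: PR_simps const_def e_def)
      then have k0: "k = \<zero>\<^bsub>R\<^esub>" using c0 const_zero by simp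
      then have "R.combine Ks' (Es n) = \<zero>\<^bsub>R\<^esub>" using eq c0 KsR set_Es[of n]
        by (simp add: const_zero)
      then have "set (take (length (Es n)) Ks') \<subseteq> {\<zero>\<^bsub>R\<^esub>}"
        using R.independent_imp_trivial_combine[OF Kc_sub Suc.hyps] Ks Cons nm by auto
      then show ?thesis using Cons k0 by simp
    qed
  qed
qed

lemma Es_span: "R.Span Kc (Es m) = carrier R"
proof
  show "R.Span Kc (Es m) \<subseteq> carrier R"
    using R.Span_in_carrier[of Kc "Es m"] set_Es by force
  show "carrier R \<subseteq> R.Span Kc (Es m)"
  proof
    fix w assume w: "w \<in> carrier R"
    have "R.combine (cs w m) (Es m) = comb w (e 0) m" by (simp add: comb_def Ls_e0)
    also have "\<dots> = w" using w by (simp add: comb_e0) (auto simp: carrierR_iff extensional_def intro!: ext)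
    finally have wc: "w = R.combine (cs w m) (Es m)" by simp
    have "set (cs w m) \<subseteq> Kc"
    proof -
      have "\<And>n. n \<le> m \<Longrightarrow> set (cs w n) \<subseteq> Kc"
        subgoal for n by (induct n) (auto simp: carrierR_K[OF w])
        done
      then show ?thesis by simp
    qed
    then show "w \<in> R.Span Kc (Es m)"
      using wc R.Span_eq_combine_set[OF Kc_sub set_Es] by auto
  qed
qed

lemma dim_Kc: "R.dimension m Kc (carrier R)"
  using R.dimension_independent[OF Es_indep[of m]] Es_span by simp

lemma dim_Fc: "R.dimension (m * m) Fc (carrier R)"
  by (rule R.telescopic_base[OF Fc_sub Kc_sub dim_Fc_Kc dim_Kc])

lemma lin_combine:
  assumes phi: "\<And>x. x \<in> carrier R \<Longrightarrow> \<phi> x \<in> carrier R"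
    and add: "\<And>x y. x \<in> carrier R \<Longrightarrow> y \<in> carrier R \<Longrightarrow> \<phi> (x \<oplus>\<^bsub>R\<^esub> y) = \<phi> x \<oplus>\<^bsub>R\<^esub> \<phi> y"
    and hom: "\<And>k x. k \<in> KK \<Longrightarrow> x \<in> carrier R \<Longrightarrow> \<phi> (k \<otimes>\<^bsub>R\<^esub> x) = k \<otimes>\<^bsub>R\<^esub> \<phi> x"
    and KK: "KK \<subseteq> carrier R"
  shows "set Ks \<subseteq> KK \<Longrightarrow> set Us \<subseteq> carrier R \<Longrightarrow> \<phi> (R.combine Ks Us) = R.combine Ks (map \<phi> Us)"
proof (induct Ks Us rule: R.combine.induct)
  case (1 k Ks u Us)
  have c: "R.combine Ks Us \<in> carrier R" using 1 KK by (intro R.combine_in_carrier) auto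
  have ku: "k \<otimes>\<^bsub>R\<^esub> u \<in> carrier R" using 1 KK by auto
  have "\<phi> (R.combine (k # Ks) (u # Us)) = \<phi> (k \<otimes>\<^bsub>R\<^esub> u) \<oplus>\<^bsub>R\<^esub> \<phi> (R.combine Ks Us)"
    using add[OF ku c] by simp
  then show ?case using 1 KK by (simp add: hom)
next
  case ("2_1" Us)
  have "\<phi> \<zero>\<^bsub>R\<^esub> \<oplus>\<^bsub>R\<^esub> \<phi> \<zero>\<^bsub>R\<^esub> = \<phi> \<zero>\<^bsub>R\<^esub> \<oplus>\<^bsub>R\<^esub> \<zero>\<^bsub>R\<^esub>" using add[of "\<zero>\<^bsub>R\<^esub>" "\<zero>\<^bsub>R\<^esub>"] phi by simp
  then have "\<phi> \<zero>\<^bsub>R\<^esub> = \<zero>\<^bsub>R\<^esub>" using phi[of "\<zero>\<^bsub>R\<^esub>"] R.add.l_cancel_one by force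
  then show ?case by simp
next
  case ("2_2" Ks)
  have "\<phi> \<zero>\<^bsub>R\<^esub> \<oplus>\<^bsub>R\<^esub> \<phi> \<zero>\<^bsub>R\<^esub> = \<phi> \<zero>\<^bsub>R\<^esub> \<oplus>\<^bsub>R\<^esub> \<zero>\<^bsub>R\<^esub>" using add[of "\<zero>\<^bsub>R\<^esub>" "\<zero>\<^bsub>R\<^esub>"] phi by simp
  then have "\<phi> \<zero>\<^bsub>R\<^esub> = \<zero>\<^bsub>R\<^esub>" using phi[of "\<zero>\<^bsub>R\<^esub>"] R.add.l_cancel_one by force
  then show ?case by simp
qed

lemma inj_lin_surj:
  assumes sub: "subfield KK R" and dim: "R.dimension n KK (carrier R)"
    and phi: "\<And>x. x \<in> carrier R \<Longrightarrow> \<phi> x \<in> carrier R"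
    and add: "\<And>x y. x \<in> carrier R \<Longrightarrow> y \<in> carrier R \<Longrightarrow> \<phi> (x \<oplus>\<^bsub>R\<^esub> y) = \<phi> x \<oplus>\<^bsub>R\<^esub> \<phi> y"
    and hom: "\<And>k x. k \<in> KK \<Longrightarrow> x \<in> carrier R \<Longrightarrow> \<phi> (k \<otimes>\<^bsub>R\<^esub> x) = k \<otimes>\<^bsub>R\<^esub> \<phi> x"
    and inj: "inj_on \<phi> (carrier R)"
  shows "\<phi> ` carrier R = carrier R"
proof -
  have KK: "KK \<subseteq> carrier R" using sub by (rule subfieldE(3))
  have lc: "\<And>Ks Us. set Ks \<subseteq> KK \<Longrightarrow> set Us \<subseteq> carrier R \<Longrightarrow> \<phi> (R.combine Ks Us) = R.combine Ks (map \<phi> Us)"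
    by (rule lin_combine[where \<phi> = \<phi> and KK = KK]) (simp_all add: phi add hom KK)
  obtain Us where Us: "set Us \<subseteq> carrier R" "R.independent KK Us" "length Us = n" "R.Span KK Us = carrier R"
    using R.exists_base[OF sub dim] by blast
  have phi0: "\<phi> \<zero>\<^bsub>R\<^esub> = \<zero>\<^bsub>R\<^esub>" using lc[of "[]" "[]"] by simp
  have mU: "set (map \<phi> Us) \<subseteq> carrier R" using Us phi by auto
  have ind: "R.independent KK (map \<phi> Us)"
  proof (rule R.trivial_combine_imp_independent[OF sub mU])
    fix Ks assume Ks: "set Ks \<subseteq> KK" and c: "R.combine Ks (map \<phi> Us) = \<zero>\<^bsub>R\<^esub>"
    have "\<phi> (R.combine Ks Us) = \<phi> \<zero>\<^bsub>R\<^esub>" using c lc[OF Ks Us(1)] phi0 by simp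
    moreover have "R.combine Ks Us \<in> carrier R" using Ks KK Us by (intro R.combine_in_carrier) auto
    ultimately have "R.combine Ks Us = \<zero>\<^bsub>R\<^esub>" using inj by (auto dest: inj_onD)
    then show "set (take (length (map \<phi> Us)) Ks) \<subseteq> {\<zero>\<^bsub>R\<^esub>}"
      using R.independent_imp_trivial_combine[OF sub Us(2) Ks] by simp
  qed
  have sp: "R.Span KK (map \<phi> Us) = carrier R"
    using R.independent_length_eq_dimension[OF sub dim ind mU] Us by simp
  show ?thesis
  proof
    show "\<phi> ` carrier R \<subseteq> carrier R" using phi by auto
    show "carrier R \<subseteq> \<phi> ` carrier R"
    proof
      fix y assume "y \<in> carrier R"
      then have "y \<in> R.Span KK (map \<phi> Us)" using sp by simp
      then obtain Ks where Ks: "set Ks \<subseteq> KK" "y = R.combine Ks (map \<phi> Us)"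
        using R.Span_eq_combine_set[OF sub mU] by auto
      then have "y = \<phi> (R.combine Ks Us)" using lc[OF Ks(1) Us(1)] by simp
      moreover have "R.combine Ks Us \<in> carrier R" using Ks KK Us by (intro R.combine_in_carrier) auto
      ultimately show "y \<in> \<phi> ` carrier R" by auto
    qed
  qed
qed

end

context cyc
begin

definition d :: "nat \<Rightarrow> 'a" where "d i = (\<sigma>^^i) a"

lemma d_closed[simp]: "d i \<in> carrier K" by (simp add: d_def aK)

lemma \<sigma>n_inj: "inj_on (\<sigma>^^n) (carrier K)"
proof (induct n)
  case 0 then show ?case by simp
next
  case (Suc n)
  have "inj_on (\<sigma> \<circ> (\<sigma>^^n)) (carrier K)"
  proof (rule comp_inj_on[OF Suc])
    show "inj_on \<sigma> ((\<sigma>^^n) ` carrier K)"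
      by (rule inj_on_subset[OF \<sigma>inj]) auto
  qed
  then show ?case by (simp only: funpow.simps(2))
qed

lemma \<sigma>_mq: "x \<in> carrier K \<Longrightarrow> (\<sigma>^^(m * q)) x = x"
proof (induct q)
  case 0 then show ?case by simp
next
  case (Suc q)
  have "(\<sigma>^^(m * Suc q)) x = (\<sigma>^^m) ((\<sigma>^^(m * q)) x)" by (simp add: funpow_add)
  then show ?case using Suc by (simp add: \<sigma>m)
qed

lemma \<sigma>_pr: "(\<sigma>^^p) a = a \<Longrightarrow> (\<sigma>^^(p * r)) a = a"
proof (induct r)
  case 0 then show ?case by simp
next
  case (Suc r)
  have "(\<sigma>^^(p * Suc r)) a = (\<sigma>^^p) ((\<sigma>^^(p * r)) a)" by (simp add: funpow_add)
  then show ?case using Suc by simp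
qed

lemma a_nz: "a \<noteq> \<zero>" using a\<sigma> by auto

lemma no_fix: "0 < p \<Longrightarrow> p < m \<Longrightarrow> (\<sigma>^^p) a \<noteq> a"
proof
  assume p: "0 < p" "p < m" and fx: "(\<sigma>^^p) a = a"
  have "\<not> m dvd p" using p by (auto dest: dvd_imp_le)
  then have "coprime m p" using primem by (simp add: prime_imp_coprime)
  then have g: "gcd p m = 1" by (simp add: coprime_commute)
  obtain x y where xy: "p * x = m * y + gcd p m" using bezout_nat[of p m] p by auto
  have "(\<sigma>^^(p * x)) a = a" using \<sigma>_pr[OF fx] .
  moreover have "(\<sigma>^^(p * x)) a = \<sigma> ((\<sigma>^^(m * y)) a)" using xy g by (simp add: funpow_add)
  ultimately have "\<sigma> a = a" using \<sigma>_mq[OF aK] by simp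
  then show False using a\<sigma> by simp
qed

lemma d_dist: "i < m \<Longrightarrow> k < m \<Longrightarrow> d i = d k \<Longrightarrow> i = k"
proof (rule ccontr)
  assume *: "i < m" "k < m" "d i = d k" "i \<noteq> k"
  { fix i k assume ik: "i < k" "k < m" "d i = d k"
    have "d k = (\<sigma>^^(i + (k - i))) a" using ik by (simp add: d_def)
    also have "\<dots> = (\<sigma>^^i) ((\<sigma>^^(k - i)) a)" by (simp only: funpow_add comp_apply)
    finally have "d k = (\<sigma>^^i) ((\<sigma>^^(k - i)) a)" .
    then have "(\<sigma>^^i) ((\<sigma>^^(k - i)) a) = (\<sigma>^^i) a" using ik by (simp add: d_def)
    then have "(\<sigma>^^(k - i)) a = a" using \<sigma>n_inj[of i] aK by (auto dest: inj_onD)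
    then have False using no_fix[of "k - i"] ik by simp }
  then show False using * by (metis linorder_neqE_nat)
qed

primrec pp :: "nat \<Rightarrow> nat \<Rightarrow> nat \<Rightarrow> 'a" where
  "pp j 0 i = \<one>"
| "pp j (Suc n) i = (if n = j then pp j n i else pp j n i \<otimes> (d i \<ominus> d n))"

primrec qq :: "nat \<Rightarrow> nat \<Rightarrow> (nat \<Rightarrow> 'a) \<Rightarrow> (nat \<Rightarrow> 'a)" where
  "qq j 0 w = w"
| "qq j (Suc n) w = (if n = j then qq j n w else (T^^m) (qq j n w) \<ominus>\<^bsub>R\<^esub> const (d n) \<otimes>\<^bsub>R\<^esub> qq j n w)"

lemma pp_closed[simp]: "pp j n i \<in> carrier K" by (induct n) auto

lemma R_neg_apply: "y \<in> carrier R \<Longrightarrow> i < m \<Longrightarrow> (\<ominus>\<^bsub>R\<^esub> y) i = \<ominus> y i"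
proof -
  assume y: "y \<in> carrier R" and i: "i < m"
  have "(\<ominus>\<^bsub>R\<^esub> y) \<oplus>\<^bsub>R\<^esub> y = \<zero>\<^bsub>R\<^esub>" using y by (simp add: R.l_neg)
  then have "(\<ominus>\<^bsub>R\<^esub> y) i \<oplus> y i = \<zero>" using i by (metis R_add_apply PR_simps(4) restrict_apply' lessThan_iff)
  moreover have "(\<ominus>\<^bsub>R\<^esub> y) i \<in> carrier K" using y i by (simp add: carrierR_K)
  ultimately show ?thesis using y i carrierR_K K.minus_equality by metis
qed

lemma R_minus_apply: "x \<in> carrier R \<Longrightarrow> y \<in> carrier R \<Longrightarrow> i < m \<Longrightarrow> (x \<ominus>\<^bsub>R\<^esub> y) i = x i \<ominus> y i"
  by (simp add: a_minus_def R_add_apply R_neg_apply)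

lemma qq_formula: "w \<in> carrier R \<Longrightarrow> qq j n w = (\<lambda>i\<in>{..<m}. pp j n i \<otimes> w i)"
proof (induct n)
  case 0 then show ?case by (auto simp: carrierR_iff extensional_def intro!: ext)
next
  case (Suc n)
  have w: "w \<in> carrier R" by fact
  have z: "(\<lambda>i\<in>{..<m}. pp j n i \<otimes> w i) \<in> carrier R" using w by (auto simp: PR_simps carrierR_K)
  show ?case
  proof (cases "n = j")
    case True then show ?thesis using Suc by simp
  next
    case False
    have IH: "qq j n w = (\<lambda>i\<in>{..<m}. pp j n i \<otimes> w i)" using Suc by blast
    have "qq j (Suc n) w = (T^^m) (\<lambda>i\<in>{..<m}. pp j n i \<otimes> w i) \<ominus>\<^bsub>R\<^esub> const (d n) \<otimes>\<^bsub>R\<^esub> (\<lambda>i\<in>{..<m}. pp j n i \<otimes> w i)"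
      using False by (simp only: qq.simps(2) if_False IH simp_thms)
    also have "\<dots> = (\<lambda>i\<in>{..<m}. pp j (Suc n) i \<otimes> w i)"
    proof (rule carrierR_eqI)
      show "(T^^m) (\<lambda>i\<in>{..<m}. pp j n i \<otimes> w i) \<ominus>\<^bsub>R\<^esub> const (d n) \<otimes>\<^bsub>R\<^esub> (\<lambda>i\<in>{..<m}. pp j n i \<otimes> w i) \<in> carrier R"
        using z by (simp add: R.minus_closed)
      show "(\<lambda>i\<in>{..<m}. pp j (Suc n) i \<otimes> w i) \<in> carrier R" using w by (auto simp: PR_simps carrierR_K)
      fix i assume i: "i < m"
      have wi: "w i \<in> carrier K" using w i carrierR_K by simp
      have "((T^^m) (\<lambda>i\<in>{..<m}. pp j n i \<otimes> w i) \<ominus>\<^bsub>R\<^esub> const (d n) \<otimes>\<^bsub>R\<^esub> (\<lambda>i\<in>{..<m}. pp j n i \<otimes> w i)) i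
          = d i \<otimes> (pp j n i \<otimes> w i) \<ominus> d n \<otimes> (pp j n i \<otimes> w i)"
        by (subst R_minus_apply[OF Tn_closed[OF z] R.m_closed[OF const_closed[OF d_closed] z] i]) (simp add: Phi[OF z] R_mult_apply const_apply d_def i)
      also have "\<dots> = (pp j n i \<otimes> (d i \<ominus> d n)) \<otimes> w i"
        using wi by (simp add: K.minus_eq K.l_distr K.r_distr K.r_minus K.l_minus K.m_ac)
      also have "\<dots> = (\<lambda>i\<in>{..<m}. pp j (Suc n) i \<otimes> w i) i" using i False by simp
      finally show "((T^^m) (\<lambda>i\<in>{..<m}. pp j n i \<otimes> w i) \<ominus>\<^bsub>R\<^esub> const (d n) \<otimes>\<^bsub>R\<^esub> (\<lambda>i\<in>{..<m}. pp j n i \<otimes> w i)) i = (\<lambda>i\<in>{..<m}. pp j (Suc n) i \<otimes> w i) i" .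
    qed
    finally show ?thesis .
  qed
qed

lemma pp_zero: "i < m \<Longrightarrow> i \<noteq> j \<Longrightarrow> i < n \<Longrightarrow> pp j n i = \<zero>"
proof (induct n)
  case 0 then show ?case by simp
next
  case (Suc n)
  show ?case
  proof (cases "n = i")
    case True
    then show ?thesis using Suc by (simp add: K.minus_eq K.r_neg)
  next
    case False
    then have h: "pp j n i = \<zero>" using Suc by simp
    show ?thesis using h by (cases "n = j") auto
  qed
qed

lemma pp_nz: "j < m \<Longrightarrow> n \<le> m \<Longrightarrow> pp j n j \<noteq> \<zero>"
proof (induct n)
  case 0 then show ?case by simp
next
  case (Suc n)
  have IH: "pp j n j \<noteq> \<zero>" using Suc by simp
  show ?case
  proof (cases "n = j")
    case True then show ?thesis using IH by simp
  next
    case False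
    have "d j \<ominus> d n \<noteq> \<zero>"
    proof
      assume "d j \<ominus> d n = \<zero>"
      then have "d j = d n" by (simp add: K.r_right_minus_eq)
      then show False using d_dist[of j n] Suc False by simp
    qed
    then show ?thesis using IH False by (simp add: K.integral_iff)
  qed
qed

end

context cyc
begin

lemma T_zero: "T \<zero>\<^bsub>R\<^esub> = \<zero>\<^bsub>R\<^esub>"
  apply (rule carrierR_eqI)
    apply simp
   apply simp
  subgoal for i using m0 aK by (cases "i = 0") (simp_all add: T_def PR_simps less_imp_diff_less)
  done

lemma Kc_R: "Kc \<subseteq> carrier R" by auto

lemma Span_cons: "R.Span Kc (u # Us) = R.line_extension Kc u (R.Span Kc Us)"
  by simp

lemma T_Span: "set Us \<subseteq> carrier R \<Longrightarrow> T ` R.Span Kc Us \<subseteq> R.Span Kc (map T Us)"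
proof (induct Us)
  case Nil then show ?case by (simp add: T_zero)
next
  case (Cons u Us)
  have u: "u \<in> carrier R" and Us: "set Us \<subseteq> carrier R" using Cons by auto
  show ?case
  proof
    fix y assume "y \<in> T ` R.Span Kc (u # Us)"
    then obtain x where x: "x \<in> R.line_extension Kc u (R.Span Kc Us)" "y = T x" by auto
    then obtain k w where kw: "k \<in> Kc" "w \<in> R.Span Kc Us" "x = k \<otimes>\<^bsub>R\<^esub> u \<oplus>\<^bsub>R\<^esub> w"
      using R.line_extension_mem_iff by blast
    obtain c where c: "c \<in> carrier K" "k = const c" using kw by auto
    have wR: "w \<in> carrier R" using kw Us R.Span_in_carrier[OF Kc_R Us] by auto
    have "y = const (\<sigma> c) \<otimes>\<^bsub>R\<^esub> T u \<oplus>\<^bsub>R\<^esub> T w"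
      using x kw c u wR by (simp add: T_add T_smult)
    moreover have "T w \<in> R.Span Kc (map T Us)" using Cons Us kw by auto
    moreover have "const (\<sigma> c) \<in> Kc" using c by simp
    ultimately have "y \<in> R.line_extension Kc (T u) (R.Span Kc (map T Us))"
      using R.line_extension_mem_iff by blast
    then show "y \<in> R.Span Kc (map T (u # Us))" by simp
  qed
qed

lemma e_nz: "j < m \<Longrightarrow> e j \<noteq> \<zero>\<^bsub>R\<^esub>"
proof
  assume "j < m" "e j = \<zero>\<^bsub>R\<^esub>"
  then have "e j j = \<zero>\<^bsub>R\<^esub> j" by simp
  then show False using \<open>j < m\<close> by (simp add: e_def PR_simps)
qed

lemma stepA:
  assumes Us: "set Us \<subseteq> carrier R" and Tst: "\<And>u. u \<in> R.Span Kc Us \<Longrightarrow> T u \<in> R.Span Kc Us"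
    and w: "w \<in> R.Span Kc Us" and j: "j < m" and wj: "w j \<noteq> \<zero>"
  shows "e j \<in> R.Span Kc Us"
proof -
  let ?U = "R.Span Kc Us"
  have UR: "?U \<subseteq> carrier R" using R.Span_in_carrier[OF Kc_R Us] .
  have wR: "w \<in> carrier R" using w UR by auto
  have Tn: "\<And>u n. u \<in> ?U \<Longrightarrow> (T^^n) u \<in> ?U"
    subgoal for u n by (induct n) (auto simp del: R.Span.simps intro: Tst)
    done
  have qU: "\<And>n. qq j n w \<in> ?U"
  proof -
    fix n show "qq j n w \<in> ?U"
    proof (induct n)
      case 0 then show ?case using w by simp
    next
      case (Suc n)
      have a1: "(T^^m) (qq j n w) \<in> ?U" using Suc Tn by simp
      have a2: "const (d n) \<otimes>\<^bsub>R\<^esub> qq j n w \<in> ?U"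
        using R.Span_smult_closed[OF Kc_sub Us, of "const (d n)" "qq j n w"] Suc by simp
      have "(T^^m) (qq j n w) \<ominus>\<^bsub>R\<^esub> const (d n) \<otimes>\<^bsub>R\<^esub> qq j n w \<in> ?U"
        using a1 a2 R.Span_subgroup_props[OF Kc_sub Us] by (simp add: a_minus_def)
      then show ?case using Suc by (cases "n = j") (simp_all del: R.Span.simps)
    qed
  qed
  define c where "c = pp j m j \<otimes> w j"
  have cK: "c \<in> carrier K" using wR j carrierR_K by (simp add: c_def)
  have cnz: "c \<noteq> \<zero>" using pp_nz[OF j order.refl] wj wR j carrierR_K by (simp add: c_def K.integral_iff)
  have "qq j m w = const c \<otimes>\<^bsub>R\<^esub> e j"
  proof (rule carrierR_eqI)
    show "qq j m w \<in> carrier R" using qU UR by auto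
    show "const c \<otimes>\<^bsub>R\<^esub> e j \<in> carrier R" using cK by simp
    fix i assume i: "i < m"
    show "qq j m w i = (const c \<otimes>\<^bsub>R\<^esub> e j) i"
      using i wR carrierR_K[OF wR i] cK pp_zero[of i j m]
      by (cases "i = j") (simp_all add: qq_formula R_mult_apply const_apply e_def c_def)
  qed
  then have ceU: "const c \<otimes>\<^bsub>R\<^esub> e j \<in> ?U" using qU by metis
  have ic: "inv c \<in> carrier K" "inv c \<otimes> c = \<one>" using cK cnz K.field_Units by auto
  have "e j = const (inv c) \<otimes>\<^bsub>R\<^esub> (const c \<otimes>\<^bsub>R\<^esub> e j)"
    using ic cK by (simp add: R.m_assoc[symmetric] const_mult[symmetric] const_one)
  also have "\<dots> \<in> ?U"
    using R.Span_smult_closed[OF Kc_sub Us, of "const (inv c)" "const c \<otimes>\<^bsub>R\<^esub> e j"] ceU ic by simp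
  finally show ?thesis .
qed

lemma stepC:
  assumes Us: "set Us \<subseteq> carrier R" and Tst: "\<And>u. u \<in> R.Span Kc Us \<Longrightarrow> T u \<in> R.Span Kc Us"
    and ej: "e j \<in> R.Span Kc Us" and j: "j < m"
  shows "e (Suc j mod m) \<in> R.Span Kc Us"
proof (rule stepA[OF Us Tst])
  show "T (e j) \<in> R.Span Kc Us" using ej Tst by simp
  show "Suc j mod m < m" using m0 by simp
  show "T (e j) (Suc j mod m) \<noteq> \<zero>"
  proof (cases "Suc j < m")
    case True
    then show ?thesis by (simp add: T_def e_def)
  next
    case False
    then have "Suc j = m" using j by simp
    then have "Suc j mod m = 0" "m - 1 = j" by auto
    then show ?thesis using m0 a_nz aK j by (simp add: T_def e_def)
  qed
qed

lemma all_e: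
  assumes Us: "set Us \<subseteq> carrier R" and Tst: "\<And>u. u \<in> R.Span Kc Us \<Longrightarrow> T u \<in> R.Span Kc Us"
    and w: "w \<in> R.Span Kc Us" and wnz: "w \<noteq> \<zero>\<^bsub>R\<^esub>"
  shows "R.Span Kc Us = carrier R"
proof -
  have UR: "R.Span Kc Us \<subseteq> carrier R" using R.Span_in_carrier[OF Kc_R Us] .
  have wR: "w \<in> carrier R" using w UR by auto
  obtain j where j: "j < m" "w j \<noteq> \<zero>"
  proof (rule ccontr)
    assume "\<not> thesis"
    then have "\<And>j. j < m \<Longrightarrow> w j = \<zero>" using that by blast
    then have "w = \<zero>\<^bsub>R\<^esub>" using wR by (intro carrierR_eqI) (auto simp: PR_simps)
    then show False using wnz by simp
  qed
  have ej: "e j \<in> R.Span Kc Us" by (rule stepA[OF Us Tst w j])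
  have ek: "\<And>k. e ((j + k) mod m) \<in> R.Span Kc Us"
  proof -
    fix k show "e ((j + k) mod m) \<in> R.Span Kc Us"
    proof (induct k)
      case 0 then show ?case using ej j by simp
    next
      case (Suc k)
      have "e (Suc ((j + k) mod m) mod m) \<in> R.Span Kc Us"
        using stepC[OF Us Tst Suc] m0 by simp
      then show ?case by (simp add: mod_Suc_eq)
    qed
  qed
  have "\<And>i. i < m \<Longrightarrow> e i \<in> R.Span Kc Us"
  proof -
    fix i assume i: "i < m"
    have "(j + (m - j + i)) mod m = i" using i j by simp
    then show "e i \<in> R.Span Kc Us" using ek[of "m - j + i"] by simp
  qed
  then have "set (Es m) \<subseteq> R.Span Kc Us"
  proof -
    have "\<And>n. n \<le> m \<Longrightarrow> set (Es n) \<subseteq> R.Span Kc Us"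
      subgoal for n using \<open>\<And>i. i < m \<Longrightarrow> e i \<in> R.Span Kc Us\<close> by (induct n) auto
      done
    then show ?thesis by simp
  qed
  then have "R.Span Kc (Es m) \<subseteq> R.Span Kc Us" using R.mono_Span_subset[OF Kc_sub _ Us] by blast
  then show ?thesis using Es_span UR by auto
qed

lemma Ls_closed: "y \<in> carrier R \<Longrightarrow> set (Ls y n) \<subseteq> carrier R" by (rule set_Ls)

lemma Ls_indep:
  assumes v: "v \<in> carrier R" and vnz: "v \<noteq> \<zero>\<^bsub>R\<^esub>"
  shows "R.independent Kc (Ls v m)"
proof -
  let ?P = "\<lambda>n. (T^^n) v \<in> R.Span Kc (Ls v n)"
  have ex: "\<exists>n. ?P n"
  proof (rule ccontr)
    assume "\<not> (\<exists>n. ?P n)"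
    then have "\<And>n. R.independent Kc (Ls v n)"
    proof -
      fix n assume np: "\<not> (\<exists>n. ?P n)"
      show "R.independent Kc (Ls v n)"
      proof (induct n)
        case 0 then show ?case by simp
      next
        case (Suc n)
        then show ?case using np v by (auto intro: R.li_Cons)
      qed
    qed
    then have "length (Ls v (Suc m)) \<le> m"
      using R.independent_length_le_dimension[OF Kc_sub dim_Kc _ Ls_closed[OF v]] by blast
    then show False by simp
  qed
  define s where "s = (LEAST n. ?P n)"
  have Ps: "?P s" using LeastI_ex[OF ex] by (simp add: s_def)
  have notP: "\<And>n. n < s \<Longrightarrow> \<not> ?P n" using not_less_Least s_def by blast
  have ind: "\<And>n. n \<le> s \<Longrightarrow> R.independent Kc (Ls v n)"
  proof -
    fix n show "n \<le> s \<Longrightarrow> R.independent Kc (Ls v n)"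
    proof (induct n)
      case 0 then show ?case by simp
    next
      case (Suc n)
      then show ?case using notP[of n] v by (auto intro: R.li_Cons)
    qed
  qed
  have s0: "s \<noteq> 0"
  proof
    assume "s = 0"
    then have "v \<in> R.Span Kc []" using Ps by simp
    then show False using vnz by simp
  qed
  have vU: "v \<in> R.Span Kc (Ls v s)"
  proof -
    have "\<And>n. v \<in> set (Ls v (Suc n))"
      subgoal for n by (induct n) auto
      done
    then have "v \<in> set (Ls v (Suc (s - 1)))" by blast
    then have "v \<in> set (Ls v s)" using s0 by simp
    then show ?thesis using R.Span_base_incl[OF Kc_sub Ls_closed[OF v]] by blast
  qed
  have Tst: "\<And>u. u \<in> R.Span Kc (Ls v s) \<Longrightarrow> T u \<in> R.Span Kc (Ls v s)"
  proof -
    fix u assume u: "u \<in> R.Span Kc (Ls v s)"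
    have "set (map T (Ls v s)) \<subseteq> R.Span Kc (Ls v s)"
    proof -
      have "\<And>n. n \<le> s \<Longrightarrow> set (map T (Ls v n)) \<subseteq> R.Span Kc (Ls v s)"
      proof -
        fix n show "n \<le> s \<Longrightarrow> set (map T (Ls v n)) \<subseteq> R.Span Kc (Ls v s)"
        proof (induct n)
          case 0 then show ?case by simp
        next
          case (Suc n)
          have "T ((T^^n) v) = (T^^Suc n) v" by simp
          moreover have "(T^^Suc n) v \<in> R.Span Kc (Ls v s)"
          proof (cases "Suc n = s")
            case True then show ?thesis using Ps by simp
          next
            case False
            then have "Suc n < s" using Suc by simp
            then have "(T^^Suc n) v \<in> set (Ls v s)"
            proof -
              have "\<And>k. Suc n < k \<Longrightarrow> (T^^Suc n) v \<in> set (Ls v k)"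
                subgoal for k by (induct k) (auto simp: less_Suc_eq simp del: funpow.simps)
                done
              then show ?thesis using \<open>Suc n < s\<close> by simp
            qed
            then show ?thesis using R.Span_base_incl[OF Kc_sub Ls_closed[OF v]] by blast
          qed
          ultimately show ?case using Suc by simp
        qed
      qed
      then show ?thesis by simp
    qed
    then have "R.Span Kc (map T (Ls v s)) \<subseteq> R.Span Kc (Ls v s)"
      using R.mono_Span_subset[OF Kc_sub _ ] Ls_closed[OF v] by (simp add: set_Ls)
    moreover have "T u \<in> R.Span Kc (map T (Ls v s))" using T_Span[OF Ls_closed[OF v]] u by blast
    ultimately show "T u \<in> R.Span Kc (Ls v s)" by blast
  qed
  have "R.Span Kc (Ls v s) = carrier R" by (rule all_e[OF Ls_closed[OF v] Tst vU vnz])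
  then have "R.dimension s Kc (carrier R)"
    using R.dimension_independent[OF ind[OF order.refl]] by simp
  then have "s = m" using R.dimension_is_inj[OF Kc_sub _ dim_Kc] by blast
  then show ?thesis using ind by simp
qed

end

context cyc
begin

lemma cs_Kc: "x \<in> carrier R \<Longrightarrow> n \<le> m \<Longrightarrow> set (cs x n) \<subseteq> Kc"
  by (induct n) (auto simp: carrierR_K)

lemma cs_mem: "i < n \<Longrightarrow> const (x i) \<in> set (cs x n)"
  by (induct n) (auto simp: less_Suc_eq)

lemma no_zd:
  assumes x: "x \<in> carrier R" and y: "y \<in> carrier R" and ynz: "y \<noteq> \<zero>\<^bsub>R\<^esub>" and xy: "mul x y = \<zero>\<^bsub>R\<^esub>"
  shows "x = \<zero>\<^bsub>R\<^esub>"
proof -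
  have "R.combine (cs x m) (Ls y m) = \<zero>\<^bsub>R\<^esub>" using xy by (simp add: mul_def comb_def)
  then have "set (take (length (Ls y m)) (cs x m)) \<subseteq> {\<zero>\<^bsub>R\<^esub>}"
    using R.independent_imp_trivial_combine[OF Kc_sub Ls_indep[OF y ynz] cs_Kc[OF x order.refl]] by blast
  then have z: "set (cs x m) \<subseteq> {\<zero>\<^bsub>R\<^esub>}" by simp
  show ?thesis
  proof (rule carrierR_eqI[OF x R.zero_closed])
    fix i assume i: "i < m"
    have "const (x i) = \<zero>\<^bsub>R\<^esub>" using z cs_mem[OF i, of x] by auto
    then have "const (x i) 0 = \<zero>\<^bsub>R\<^esub> 0" by simp
    then show "x i = \<zero>\<^bsub>R\<^esub> i" using m0 i by (simp add: const_def PR_simps)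
  qed
qed

lemma sub_zero_eq: "y \<in> carrier R \<Longrightarrow> y' \<in> carrier R \<Longrightarrow> y \<ominus>\<^bsub>R\<^esub> y' = \<zero>\<^bsub>R\<^esub> \<Longrightarrow> y = y'"
  by (metis R.r_right_minus_eq)

lemma left_bij: "u \<in> carrier R \<Longrightarrow> u \<noteq> \<zero>\<^bsub>R\<^esub> \<Longrightarrow> bij_betw (mul u) (carrier R) (carrier R)"
proof -
  assume u: "u \<in> carrier R" and unz: "u \<noteq> \<zero>\<^bsub>R\<^esub>"
  have inj: "inj_on (mul u) (carrier R)"
  proof (rule inj_onI)
    fix y y' assume y: "y \<in> carrier R" and y': "y' \<in> carrier R" and eq: "mul u y = mul u y'"
    have yy: "y \<ominus>\<^bsub>R\<^esub> y' \<in> carrier R" using y y' by simp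
    have "mul u ((y \<ominus>\<^bsub>R\<^esub> y') \<oplus>\<^bsub>R\<^esub> y') = mul u (y \<ominus>\<^bsub>R\<^esub> y') \<oplus>\<^bsub>R\<^esub> mul u y'"
      using u yy y' by (simp add: mul_def comb_radd)
    moreover have "(y \<ominus>\<^bsub>R\<^esub> y') \<oplus>\<^bsub>R\<^esub> y' = y" using y y' by (simp add: a_minus_def R.a_assoc R.l_neg)
    ultimately have "mul u (y \<ominus>\<^bsub>R\<^esub> y') \<oplus>\<^bsub>R\<^esub> mul u y' = mul u y'" using eq by simp
    then have "mul u (y \<ominus>\<^bsub>R\<^esub> y') = \<zero>\<^bsub>R\<^esub>" using u yy y' mul_closed by simp
    then show "y = y'"
      using no_zd[OF u yy] unz sub_zero_eq[OF y y'] by blast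
  qed
  have "mul u ` carrier R = carrier R"
  proof (rule inj_lin_surj[OF Fc_sub dim_Fc _ _ _ inj])
    show "\<And>x. x \<in> carrier R \<Longrightarrow> mul u x \<in> carrier R" using u by (simp add: mul_closed)
    show "\<And>x y. x \<in> carrier R \<Longrightarrow> y \<in> carrier R \<Longrightarrow> mul u (x \<oplus>\<^bsub>R\<^esub> y) = mul u x \<oplus>\<^bsub>R\<^esub> mul u y"
      using u by (simp add: mul_def comb_radd)
    show "\<And>k x. k \<in> Fc \<Longrightarrow> x \<in> carrier R \<Longrightarrow> mul u (k \<otimes>\<^bsub>R\<^esub> x) = k \<otimes>\<^bsub>R\<^esub> mul u x"
      using u by (auto simp: mul_def comb_rsmult)
  qed
  then show ?thesis using inj by (simp add: bij_betw_def)
qed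

lemma right_bij: "v \<in> carrier R \<Longrightarrow> v \<noteq> \<zero>\<^bsub>R\<^esub> \<Longrightarrow> bij_betw (\<lambda>x. mul x v) (carrier R) (carrier R)"
proof -
  assume v: "v \<in> carrier R" and vnz: "v \<noteq> \<zero>\<^bsub>R\<^esub>"
  have inj: "inj_on (\<lambda>x. mul x v) (carrier R)"
  proof (rule inj_onI)
    fix y y' assume y: "y \<in> carrier R" and y': "y' \<in> carrier R" and eq: "mul y v = mul y' v"
    have yy: "y \<ominus>\<^bsub>R\<^esub> y' \<in> carrier R" using y y' by simp
    have "mul ((y \<ominus>\<^bsub>R\<^esub> y') \<oplus>\<^bsub>R\<^esub> y') v = mul (y \<ominus>\<^bsub>R\<^esub> y') v \<oplus>\<^bsub>R\<^esub> mul y' v"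
      using v yy y' by (simp add: mul_def comb_ladd)
    moreover have "(y \<ominus>\<^bsub>R\<^esub> y') \<oplus>\<^bsub>R\<^esub> y' = y" using y y' by (simp add: a_minus_def R.a_assoc R.l_neg)
    ultimately have "mul (y \<ominus>\<^bsub>R\<^esub> y') v \<oplus>\<^bsub>R\<^esub> mul y' v = mul y' v" using eq by simp
    then have "mul (y \<ominus>\<^bsub>R\<^esub> y') v = \<zero>\<^bsub>R\<^esub>" using v yy y' mul_closed by simp
    then show "y = y'"
      using no_zd[OF yy v vnz] sub_zero_eq[OF y y'] by blast
  qed
  have "(\<lambda>x. mul x v) ` carrier R = carrier R"
  proof (rule inj_lin_surj[OF Fc_sub dim_Fc _ _ _ inj])
    show "\<And>x. x \<in> carrier R \<Longrightarrow> mul x v \<in> carrier R" using v by (simp add: mul_closed)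
    show "\<And>x y. x \<in> carrier R \<Longrightarrow> y \<in> carrier R \<Longrightarrow> mul (x \<oplus>\<^bsub>R\<^esub> y) v = mul x v \<oplus>\<^bsub>R\<^esub> mul y v"
      using v by (simp add: mul_def comb_ladd)
    show "\<And>k x. k \<in> Fc \<Longrightarrow> x \<in> carrier R \<Longrightarrow> mul (k \<otimes>\<^bsub>R\<^esub> x) v = k \<otimes>\<^bsub>R\<^esub> mul x v"
      using v FK by (auto simp: mul_def comb_lsmult)
  qed
  then show ?thesis using inj by (simp add: bij_betw_def)
qed

lemma A_division: "nonassoc_division_algebra K F A"
  unfolding nonassoc_division_algebra_def
proof (intro conjI ballI impI)
  show "nonassoc_algebra K F A" by (rule A_nonassoc)
  show "carrier A \<noteq> {\<zero>\<^bsub>A\<^esub>}"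
  proof
    assume "carrier A = {\<zero>\<^bsub>A\<^esub>}"
    then have "e 0 = \<zero>\<^bsub>R\<^esub>" using e_closed[of 0] by (auto simp: A_simps)
    then show False using e_nz m0 by blast
  qed
  fix u assume u: "u \<in> carrier A" and unz: "u \<noteq> \<zero>\<^bsub>A\<^esub>"
  show "bij_betw (\<lambda>x. u \<otimes>\<^bsub>A\<^esub> x) (carrier A) (carrier A)"
    using left_bij[of u] u unz by (simp add: A_simps)
  show "bij_betw (\<lambda>x. x \<otimes>\<^bsub>A\<^esub> u) (carrier A) (carrier A)"
    using right_bij[of u] u unz by (simp add: A_simps)
qed

lemma A_cyclic: "nonassoc_cyclic_extension K F A iota m"
  unfolding nonassoc_cyclic_extension_def
proof (intro conjI ballI bexI[of _ Hm])
  show "nonassoc_division_algebra K F A" by (rule A_division)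
  show "iota \<in> ring_hom K A" by (rule iota_hom)
  show "inj_on iota (carrier K)" by (rule iota_inj)
  show "\<And>c k. c \<in> F \<Longrightarrow> k \<in> carrier K \<Longrightarrow> iota (c \<otimes> k) = c \<odot>\<^bsub>A\<^esub> iota k" by (rule iota_F)
  show "free_left_module_rank K iota A m" by (rule A_free)
  show "Hm \<in> Aut F A" by (rule Hm_Aut)
  show "card {restrict (Hm ^^ i) (carrier A) |i. True} = m" by (rule orbit_card)
  show "\<And>H k. H \<in> {restrict (Hm ^^ i) (carrier A) |i. True} \<Longrightarrow> k \<in> carrier K \<Longrightarrow> H (iota k) = iota k"
    by (rule orbit_fix)
qed

end

lemma funpow_closed_on: "(\<And>x. x \<in> S \<Longrightarrow> f x \<in> S) \<Longrightarrow> x \<in> S \<Longrightarrow> (f^^n) x \<in> S"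
  by (induct n) auto

lemma funpow_inj_on: "inj_on f S \<Longrightarrow> (\<And>x. x \<in> S \<Longrightarrow> f x \<in> S) \<Longrightarrow> inj_on (f^^n) S"
proof (induct n)
  case 0 then show ?case by simp
next
  case (Suc n)
  have "inj_on (f \<circ> (f^^n)) S"
  proof (rule comp_inj_on)
    show "inj_on (f^^n) S" using Suc by simp
    show "inj_on f ((f^^n) ` S)" by (rule inj_on_subset[OF Suc.prems(1)]) (auto intro: funpow_closed_on Suc.prems(2))
  qed
  then show ?case by (simp only: funpow.simps(2))
qed

lemma cyclic_facts:
  fixes \<sigma> :: "'a \<Rightarrow> 'a" and S :: "'a set" and m :: nat
  assumes cl: "\<And>x. x \<in> S \<Longrightarrow> \<sigma> x \<in> S" and inj: "inj_on \<sigma> S"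
    and card: "card {restrict (\<sigma>^^i) S | i. True} = m" and m2: "2 \<le> m"
  shows "\<forall>x\<in>S. (\<sigma>^^m) x = x" and "\<exists>a\<in>S. \<sigma> a \<noteq> a"
proof -
  define f where "f i = restrict (\<sigma>^^i) S" for i
  define G where "G = {restrict (\<sigma>^^i) S | i. True}"
  have G: "G = range f" by (auto simp: G_def f_def)
  have fin: "finite G" using card m2 by (simp add: G_def card_ge_0_finite)
  have cG: "card G = m" using card by (simp add: G_def)
  have cancel: "\<And>i j. i \<le> j \<Longrightarrow> f i = f j \<Longrightarrow> f (j - i) = f 0"
  proof -
    fix i j :: nat assume ij: "i \<le> j" "f i = f j"
    show "f (j - i) = f 0"
    proof (rule ext)
      fix x show "f (j - i) x = f 0 x"
      proof (cases "x \<in> S")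
        case True
        have e1: "(\<sigma>^^i) ((\<sigma>^^(j - i)) x) = (\<sigma>^^(i + (j - i))) x"
          by (simp only: funpow_add comp_apply)
        have e2: "i + (j - i) = j" using ij by simp
        have "f i x = f j x" using ij(2) by simp
        then have e3: "(\<sigma>^^j) x = (\<sigma>^^i) x" using True unfolding f_def by simp
        have "(\<sigma>^^i) ((\<sigma>^^(j - i)) x) = (\<sigma>^^i) x" using e1 e2 e3 by simp
        then have "(\<sigma>^^(j - i)) x = x"
          using funpow_inj_on[OF inj cl, where n = i] True funpow_closed_on[OF cl True, where n = "j - i"]
          by (auto dest: inj_onD)
        then show ?thesis using True by (simp add: f_def)
      qed (simp add: f_def)
    qed
  qed
  have per: "\<And>p q x. f p = f 0 \<Longrightarrow> x \<in> S \<Longrightarrow> (\<sigma>^^(p * q)) x = x"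
  proof -
    fix p q :: nat and x assume p: "f p = f 0" and x: "x \<in> S"
    show "(\<sigma>^^(p * q)) x = x"
    proof (induct q)
      case 0 then show ?case by simp
    next
      case (Suc q)
      have "(\<sigma>^^(p * Suc q)) x = (\<sigma>^^p) ((\<sigma>^^(p * q)) x)" by (simp add: funpow_add)
      also have "\<dots> = (\<sigma>^^p) x" using Suc by simp
      also have "\<dots> = x" using fun_cong[OF p, of x] x by (simp add: f_def)
      finally show ?case .
    qed
  qed
  have bound: "\<And>p. 0 < p \<Longrightarrow> f p = f 0 \<Longrightarrow> m \<le> p"
  proof -
    fix p :: nat assume p: "0 < p" "f p = f 0"
    have "G \<subseteq> f ` {..<p}"
    proof
      fix g assume "g \<in> G"
      then obtain n where n: "g = f n" using G by auto
      have "f n = f (n mod p)"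
      proof (rule ext)
        fix x show "f n x = f (n mod p) x"
        proof (cases "x \<in> S")
          case True
          have "(\<sigma>^^n) x = (\<sigma>^^(n mod p)) ((\<sigma>^^(p * (n div p))) x)"
            by (metis comp_apply funpow_add mod_div_mult_eq mult.commute)
          then show ?thesis using True per[OF p(2) True] by (simp add: f_def)
        qed (simp add: f_def)
      qed
      then show "g \<in> f ` {..<p}" using n p by auto
    qed
    then have "card G \<le> card (f ` {..<p})" by (simp add: card_mono)
    also have "\<dots> \<le> p" using card_image_le[of "{..<p}" f] by simp
    finally show "m \<le> p" using cG by simp
  qed
  obtain p where p: "0 < p" "p \<le> m" "f p = f 0"
  proof -
    have "\<not> inj_on f {..m}"
    proof
      assume "inj_on f {..m}"
      then have "card (f ` {..m}) = Suc m" by (simp add: card_image)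
      moreover have "f ` {..m} \<subseteq> G" using G by auto
      ultimately have "Suc m \<le> m" using card_mono[OF fin] cG by metis
      then show False by simp
    qed
    then obtain i j where ij: "i \<le> m" "j \<le> m" "i \<noteq> j" "f i = f j" by (auto simp: inj_on_def)
    show ?thesis
    proof (cases "i < j")
      case True then show ?thesis using that[of "j - i"] cancel[of i j] ij by simp
    next
      case False then show ?thesis using that[of "i - j"] cancel[of j i] ij by simp
    qed
  qed
  have "p = m" using bound[OF p(1) p(3)] p(2) by simp
  show "\<forall>x\<in>S. (\<sigma>^^m) x = x"
  proof
    fix x assume x: "x \<in> S"
    have "f p x = f 0 x" using p(3) by simp
    then show "(\<sigma>^^m) x = x" using x \<open>p = m\<close> unfolding f_def by simp
  qed
  show "\<exists>a\<in>S. \<sigma> a \<noteq> a"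
  proof (rule ccontr)
    assume "\<not> (\<exists>a\<in>S. \<sigma> a \<noteq> a)"
    then have "f 1 = f 0" by (auto simp: f_def)
    then have "m \<le> 1" using bound[of 1] by simp
    then show False using m2 by simp
  qed
qed

theorem corollary2p4:
  fixes K :: "'a ring" and F :: "'a set" and m :: nat
  assumes "Factorial_Ring.prime m"
    and "field K" and "subfield F K"
    and "\<exists>w\<in>F. primitive_root_of_unity K m w"
    and "cyclic_galois_ext K F m"
  shows "\<exists>(A :: ('a, nat \<Rightarrow> 'a) module) \<iota>. nonassoc_cyclic_extension K F A \<iota> m"
proof -
  interpret K: field K by fact
  obtain w where w: "w \<in> F" "primitive_root_of_unity K m w" using assms(4) by blast
  have dimF: "K.dimension m F (carrier K)" and cardG: "card (Gal K F) = m"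
    using assms(5) by (auto simp: cyclic_galois_ext_def)
  obtain \<sigma> where \<sigma>: "\<sigma> \<in> Gal K F" "Gal K F = {restrict (\<sigma> ^^ i) (carrier K) | i. True}"
    using assms(5) by (auto simp: cyclic_galois_ext_def)
  have \<sigma>hom: "\<sigma> \<in> ring_hom K K" and \<sigma>bij: "bij_betw \<sigma> (carrier K) (carrier K)"
    and \<sigma>F: "\<And>x. x \<in> F \<Longrightarrow> \<sigma> x = x"
    using \<sigma>(1) by (auto simp: Gal_def ring_iso_def)
  have m2: "2 \<le> m" using assms(1) by (rule prime_ge_2_nat)
  have cl: "\<And>x. x \<in> carrier K \<Longrightarrow> \<sigma> x \<in> carrier K" using \<sigma>hom by (rule ring_hom_closed)
  have inj: "inj_on \<sigma> (carrier K)" using \<sigma>bij by (simp add: bij_betw_def)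
  have cd: "card {restrict (\<sigma> ^^ i) (carrier K) | i. True} = m" using cardG \<sigma>(2) by simp
  note cf = cyclic_facts[OF cl inj cd m2]
  obtain a where a: "a \<in> carrier K" "\<sigma> a \<noteq> a" using cf(2) by blast
  have wK: "w [^]\<^bsub>K\<^esub> m = \<one>\<^bsub>K\<^esub>" "\<And>k. 0 < k \<Longrightarrow> k < m \<Longrightarrow> w [^]\<^bsub>K\<^esub> k \<noteq> \<one>\<^bsub>K\<^esub>"
    using w(2) by (auto simp: primitive_root_of_unity_def)
  have C: "cyc K F m \<sigma> a w"
    apply (rule cyc.intro[OF assms(2)])
    apply (rule cyc_axioms.intro)
                apply (rule assms(3))
               apply (rule m2)
              apply (rule assms(1))
             apply (rule \<sigma>hom)
            apply (rule inj)
           apply (erule \<sigma>F)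
          apply (use cf(1) in blast)
         apply (rule a(1))
        apply (rule a(2))
       apply (rule w(1))
      apply (rule wK(1))
     apply (erule (1) wK(2))
    apply (rule dimF)
    done
  interpret C: cyc K F m \<sigma> a w by (rule C)
  show ?thesis using C.A_cyclic by blast
qed

end
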